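(* Let $\mathrm{M}$ be a 2-space group of type $\ast2222$ (IT number 6, $pmm$) such that the flat orbifold $E^2/\mathrm{M}$ (a rectangle) is a square. Let m-ref. be the reflection of the square in a line joining midpoints of opposite sides and d-ref. the reflection in a diagonal. Then $\mathrm{Sym}(\mathrm{M})$ is the dihedral group $\langle \text{m-ref.}, \text{d-ref.}\rangle$ of order 8, $\mathrm{Sym}(\mathrm{M})=\mathrm{Aff}(\mathrm{M})$, and $\Omega:\mathrm{Aff}(\mathrm{M})\to\mathrm{Out}(\mathrm{M})$ is an isomorphism.
   Context: A 2-space group is a discrete group of isometries of $E^2$ with compact quotient. Affine maps of $E^2$ are written $a+A$ ($x\mapsto a+Ax$). For a 2-space group $\mathrm{M}$, let $N_A(\mathrm{M})$ be its normalizer in the affine group of $E^2$; each $a+A\in N_A(\mathrm{M})$ induces an affinity $(a+A)_\star:\mathrm{M}x\mapsto\mathrm{M}(a+Ax)$ of the flat orbifold $E^2/\mathrm{M}$. $\mathrm{Aff}(\mathrm{M})$ is the group of all such affinities and $\mathrm{Sym}(\mathrm{M})=\mathrm{Isom}(E^2/\mathrm{M})$ its subgroup of isometries. $\Omega:\mathrm{Aff}(\mathrm{M})\to\mathrm{Out}(\mathrm{M})$ sends $(a+A)_\star$ to the outer automorphism class of $g\mapsto(a+A)g(a+A)^{-1}$ on $\mathrm{M}$. *)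

theory Defs
  imports "HOL-Analysis.Analysis" "HOL-Algebra.Algebra"
begin

type_synonym pt = "real ^ 2"
type_synonym emap = "pt \<Rightarrow> pt"

definition affine_auto :: "emap \<Rightarrow> bool" where
  "affine_auto f \<longleftrightarrow> (\<exists>(a::pt) (A::real^2^2). invertible A \<and> f = (\<lambda>x. a + A *v x))"

definition isometry :: "emap \<Rightarrow> bool" where
  "isometry f \<longleftrightarrow> surj f \<and> (\<forall>x y. dist (f x) (f y) = dist x y)"

definition map_group :: "emap set \<Rightarrow> emap monoid" where
  "map_group M = \<lparr>carrier = M, mult = (\<circ>), one = id\<rparr>"

definition conj :: "emap \<Rightarrow> emap \<Rightarrow> emap" where
  "conj \<alpha> g = \<alpha> \<circ> g \<circ> inv_into UNIV \<alpha>"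

definition space_group2 :: "emap set \<Rightarrow> bool" where
  "space_group2 M \<longleftrightarrow>
     (\<forall>g\<in>M. isometry g) \<and>
     id \<in> M \<and> (\<forall>g\<in>M. \<forall>h\<in>M. g \<circ> h \<in> M) \<and> (\<forall>g\<in>M. inv_into UNIV g \<in> M) \<and>
     \<comment> \<open>discrete\<close>
     (\<forall>K. compact K \<longrightarrow> finite {g\<in>M. g ` K \<inter> K \<noteq> {}}) \<and>
     \<comment> \<open>compact quotient\<close>
     (\<exists>K. compact K \<and> (\<Union>g\<in>M. g ` K) = UNIV)"

text \<open>The standard group pmm (type *2222): generated by the reflections in the
  lines x1 = 0, x1 = 1, x2 = 0, x2 = 1.\<close>
definition pmm_std :: "emap set" where
  "pmm_std = {(\<lambda>x. vector [e1 * x$1 + 2 * of_int m, e2 * x$2 + 2 * of_int n]) | e1 e2 m n.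
                 e1 \<in> {1, -1} \<and> e2 \<in> {1, -1}}"

definition type_pmm :: "emap set \<Rightarrow> bool" where
  "type_pmm M \<longleftrightarrow> (\<exists>\<phi>. affine_auto \<phi> \<and> M = conj \<phi> ` pmm_std)"

definition NA :: "emap set \<Rightarrow> emap set" where
  "NA M = {\<alpha>. affine_auto \<alpha> \<and> conj \<alpha> ` M = M}"

definition orb :: "emap set \<Rightarrow> pt \<Rightarrow> pt set" where
  "orb M x = (\<lambda>g. g x) ` M"

definition OrbSp :: "emap set \<Rightarrow> pt set set" where
  "OrbSp M = range (orb M)"

definition indaff :: "emap set \<Rightarrow> emap \<Rightarrow> (pt set \<Rightarrow> pt set)" where
  "indaff M \<alpha> = (\<lambda>Ob \<in> OrbSp M. orb M (\<alpha> (SOME x. x \<in> Ob)))"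

definition Aff :: "emap set \<Rightarrow> (pt set \<Rightarrow> pt set) set" where
  "Aff M = indaff M ` NA M"

definition qdist :: "pt set \<Rightarrow> pt set \<Rightarrow> real" where
  "qdist Ob Ob2 = Inf {dist x y | x y. x \<in> Ob \<and> y \<in> Ob2}"

definition Sym :: "emap set \<Rightarrow> (pt set \<Rightarrow> pt set) set" where
  "Sym M = {F \<in> Aff M. \<forall>Ob\<in>OrbSp M. \<forall>Ob2\<in>OrbSp M. qdist (F Ob) (F Ob2) = qdist Ob Ob2}"

definition AffG :: "emap set \<Rightarrow> (pt set \<Rightarrow> pt set) monoid" where
  "AffG M = \<lparr>carrier = Aff M, mult = (\<lambda>F G. \<lambda>Ob \<in> OrbSp M. F (G Ob)),
             one = (\<lambda>Ob \<in> OrbSp M. Ob)\<rparr>"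

definition inn :: "('a, 'b) monoid_scheme \<Rightarrow> ('a \<Rightarrow> 'a) set" where
  "inn G = {(\<lambda>x \<in> carrier G. a \<otimes>\<^bsub>G\<^esub> x \<otimes>\<^bsub>G\<^esub> inv\<^bsub>G\<^esub> a) | a. a \<in> carrier G}"

definition OutG :: "('a, 'b) monoid_scheme \<Rightarrow> ('a \<Rightarrow> 'a) set monoid" where
  "OutG G = AutoGroup G Mod inn G"

definition Omega_nrm :: "emap set \<Rightarrow> emap \<Rightarrow> (emap \<Rightarrow> emap) set" where
  "Omega_nrm M \<alpha> = r_coset (AutoGroup (map_group M)) (inn (map_group M)) (\<lambda>g \<in> M. conj \<alpha> g)"

definition Omega :: "emap set \<Rightarrow> (pt set \<Rightarrow> pt set) \<Rightarrow> (emap \<Rightarrow> emap) set" where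
  "Omega M F = Omega_nrm M (SOME \<alpha>. \<alpha> \<in> NA M \<and> indaff M \<alpha> = F)"

text \<open>Reflection of E^2 in the line through p with unit direction w.\<close>
definition refl_line :: "pt \<Rightarrow> pt \<Rightarrow> emap" where
  "refl_line p w = (\<lambda>x. p + (2 * ((x - p) \<bullet> w)) *\<^sub>R w - (x - p))"

text \<open>The closed square with centre c, orthonormal side directions u, v, half side s.\<close>
definition square :: "pt \<Rightarrow> pt \<Rightarrow> pt \<Rightarrow> real \<Rightarrow> pt set" where
  "square c u v s = {c + a *\<^sub>R u + b *\<^sub>R v | a b. \<bar>a\<bar> \<le> s \<and> \<bar>b\<bar> \<le> s}"

text \<open>E^2/M is the square S: S is a fundamental domain (meets every orbit, and
  distinct interior points lie in distinct orbits).\<close>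
definition quotient_is_square :: "emap set \<Rightarrow> pt \<Rightarrow> pt \<Rightarrow> pt \<Rightarrow> real \<Rightarrow> bool" where
  "quotient_is_square M c u v s \<longleftrightarrow>
     norm u = 1 \<and> norm v = 1 \<and> u \<bullet> v = 0 \<and> s > 0 \<and>
     orb M ` square c u v s = OrbSp M \<and>
     (\<forall>x\<in>interior (square c u v s). \<forall>y\<in>interior (square c u v s). orb M x = orb M y \<longrightarrow> x = y)"

end

theory Submission
  imports Defs
begin

definition aff :: "real \<Rightarrow> real \<Rightarrow> real \<Rightarrow> real \<Rightarrow> real \<Rightarrow> real \<Rightarrow> emap" where
  "aff p q r t b1 b2 = (\<lambda>z. vector [p * z$1 + q * z$2 + b1, r * z$1 + t * z$2 + b2])"

lemma vec2_eq_iff: "(x::real^2) = y \<longleftrightarrow> x$1 = y$1 \<and> x$2 = y$2"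
  by (auto simp: vec_eq_iff forall_2)

lemma aff_nth[simp]:
  "aff p q r t b1 b2 z $ 1 = p * z$1 + q * z$2 + b1"
  "aff p q r t b1 b2 z $ 2 = r * z$1 + t * z$2 + b2"
  by (simp_all add: aff_def)

lemma aff_comp:
  "aff p q r t b1 b2 \<circ> aff p' q' r' t' b1' b2' =
   aff (p*p' + q*r') (p*q' + q*t') (r*p' + t*r') (r*q' + t*t')
       (p*b1' + q*b2' + b1) (r*b1' + t*b2' + b2)"
  by (rule ext) (simp add: vec2_eq_iff algebra_simps)

lemma aff_comp_apply:
  "aff p q r t b1 b2 (aff p' q' r' t' b1' b2' z) =
   aff (p*p' + q*r') (p*q' + q*t') (r*p' + t*r') (r*q' + t*t')
       (p*b1' + q*b2' + b1) (r*b1' + t*b2' + b2) z"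
  using aff_comp[of p q r t b1 b2 p' q' r' t' b1' b2'] by (metis comp_apply)

lemma aff_eq_iff:
  "aff p q r t b1 b2 = aff p' q' r' t' b1' b2' \<longleftrightarrow>
   p = p' \<and> q = q' \<and> r = r' \<and> t = t' \<and> b1 = b1' \<and> b2 = b2'"
proof
  assume h: "aff p q r t b1 b2 = aff p' q' r' t' b1' b2'"
  have e: "\<And>z. aff p q r t b1 b2 z = aff p' q' r' t' b1' b2' z" using h by simp
  from e[of "vector [0,0]"] have 1: "b1 = b1'" "b2 = b2'" by (simp_all add: vec2_eq_iff)
  from e[of "vector [1,0]"] 1 have 2: "p = p'" "r = r'" by (simp_all add: vec2_eq_iff)
  from e[of "vector [0,1]"] 1 have 3: "q = q'" "t = t'" by (simp_all add: vec2_eq_iff)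
  show "p = p' \<and> q = q' \<and> r = r' \<and> t = t' \<and> b1 = b1' \<and> b2 = b2'" using 1 2 3 by simp
qed simp

lemma aff_id: "aff 1 0 0 1 0 0 = id"
  by (rule ext) (simp add: vec2_eq_iff)

definition affinv :: "real \<Rightarrow> real \<Rightarrow> real \<Rightarrow> real \<Rightarrow> real \<Rightarrow> real \<Rightarrow> emap" where
  "affinv p q r t b1 b2 = (let d = p*t - q*r in
     aff (t/d) (-q/d) (-r/d) (p/d) (-(t*b1 - q*b2)/d) (-(p*b2 - r*b1)/d))"

lemma affinv_comp:
  assumes d: "p*t - q*r \<noteq> 0"
  shows "affinv p q r t b1 b2 \<circ> aff p q r t b1 b2 = id"
    "aff p q r t b1 b2 \<circ> affinv p q r t b1 b2 = id"
proof -
  define d where "d = p*t - q*r"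
  have d0: "d \<noteq> 0" using d by (simp add: d_def)
  have e: "affinv p q r t b1 b2 = aff (t/d) (-q/d) (-r/d) (p/d) (-(t*b1 - q*b2)/d) (-(p*b2 - r*b1)/d)"
    by (simp add: affinv_def d_def Let_def)
  show "affinv p q r t b1 b2 \<circ> aff p q r t b1 b2 = id"
    unfolding e aff_comp aff_id[symmetric] aff_eq_iff using d0
    by (simp add: d_def divide_simps; simp add: algebra_simps)
  show "aff p q r t b1 b2 \<circ> affinv p q r t b1 b2 = id"
    unfolding e aff_comp aff_id[symmetric] aff_eq_iff using d0
    by (simp add: d_def divide_simps; simp add: algebra_simps)
qed

lemma aff_inv:
  assumes "p*t - q*r \<noteq> 0"
  shows "inv_into UNIV (aff p q r t b1 b2) = affinv p q r t b1 b2"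
  using affinv_comp[OF assms] by (simp add: inv_unique_comp)

lemma aff_bij:
  assumes "p*t - q*r \<noteq> 0"
  shows "bij (aff p q r t b1 b2)"
  using affinv_comp[OF assms] by (metis o_bij)

lemma affine_auto_aff:
  "affine_auto f \<longleftrightarrow> (\<exists>p q r t b1 b2. p*t - q*r \<noteq> 0 \<and> f = aff p q r t b1 b2)"
proof
  assume "affine_auto f"
  then obtain a and A :: "real^2^2" where A: "invertible A" "f = (\<lambda>x. a + A *v x)"
    unfolding affine_auto_def by blast
  have "A$1$1 * A$2$2 - A$1$2 * A$2$1 \<noteq> 0" using A(1) by (simp add: invertible_det_nz det_2)
  moreover have "f = aff (A$1$1) (A$1$2) (A$2$1) (A$2$2) (a$1) (a$2)"
    by (rule ext) (simp add: A(2) vec2_eq_iff matrix_vector_mult_def sum_2 algebra_simps)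
  ultimately show "\<exists>p q r t b1 b2. p*t - q*r \<noteq> 0 \<and> f = aff p q r t b1 b2" by blast
next
  assume "\<exists>p q r t b1 b2. p*t - q*r \<noteq> 0 \<and> f = aff p q r t b1 b2"
  then obtain p q r t b1 b2 where h: "p*t - q*r \<noteq> 0" "f = aff p q r t b1 b2" by blast
  define A :: "real^2^2" where "A = vector [vector [p, q], vector [r, t]]"
  have "invertible A" using h(1) by (simp add: invertible_det_nz det_2 A_def)
  moreover have "f = (\<lambda>x. vector [b1, b2] + A *v x)"
    by (rule ext) (simp add: h(2) A_def vec2_eq_iff matrix_vector_mult_def sum_2 algebra_simps)
  ultimately show "affine_auto f" unfolding affine_auto_def by blast
qed

definition pmi :: "int \<Rightarrow> int \<Rightarrow> int \<Rightarrow> int \<Rightarrow> emap" where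
  "pmi e1 e2 m n = aff (of_int e1) 0 0 (of_int e2) (2 * of_int m) (2 * of_int n)"

definition PP :: "emap set" where
  "PP = {pmi e1 e2 m n | e1 e2 m n. e1 \<in> {1, -1} \<and> e2 \<in> {1, -1}}"

lemma pmm_std_PP: "pmm_std = PP"
proof
  show "pmm_std \<subseteq> PP"
  proof
    fix g assume "g \<in> pmm_std"
    then obtain e1 e2 :: real and m n :: int where h: "e1 \<in> {1, -1}" "e2 \<in> {1, -1}"
      "g = (\<lambda>x. vector [e1 * x$1 + 2 * of_int m, e2 * x$2 + 2 * of_int n])"
      unfolding pmm_std_def by blast
    define i1 :: int where "i1 = (if e1 = 1 then 1 else -1)"
    define i2 :: int where "i2 = (if e2 = 1 then 1 else -1)"
    have i1: "i1 \<in> {1,-1}" "e1 = of_int i1" using h(1) unfolding i1_def by auto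
    have i2: "i2 \<in> {1,-1}" "e2 = of_int i2" using h(2) unfolding i2_def by auto
    have "g = pmi i1 i2 m n" unfolding h(3) pmi_def by (rule ext) (simp add: vec2_eq_iff i1 i2)
    then show "g \<in> PP" unfolding PP_def using i1 i2 by blast
  qed
next
  show "PP \<subseteq> pmm_std"
  proof
    fix g assume "g \<in> PP"
    then obtain e1 e2 m n where h: "e1 \<in> {1,-1}" "e2 \<in> {1,-1}" "g = pmi e1 e2 m n"
      unfolding PP_def by blast
    have "g = (\<lambda>x. vector [of_int e1 * x$1 + 2 * of_int m, of_int e2 * x$2 + 2 * of_int n])"
      unfolding h(3) pmi_def by (rule ext) (simp add: vec2_eq_iff)
    moreover have "(of_int e1::real) \<in> {1,-1}" "(of_int e2::real) \<in> {1,-1}" using h by auto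
    ultimately show "g \<in> pmm_std" unfolding pmm_std_def by blast
  qed
qed

lemma pmi_comp: "pmi e1 e2 m n \<circ> pmi f1 f2 k l = pmi (e1*f1) (e2*f2) (e1*k + m) (e2*l + n)"
  unfolding pmi_def aff_comp by (simp add: aff_eq_iff algebra_simps)

lemma pmi_comp_apply: "pmi e1 e2 m n (pmi f1 f2 k l z) = pmi (e1*f1) (e2*f2) (e1*k + m) (e2*l + n) z"
  by (metis pmi_comp comp_apply)

lemma pmi_eq_iff: "pmi e1 e2 m n = pmi f1 f2 k l \<longleftrightarrow> e1 = f1 \<and> e2 = f2 \<and> m = k \<and> n = l"
  unfolding pmi_def aff_eq_iff by simp

lemma pmi_id: "pmi 1 1 0 0 = id"
  unfolding pmi_def by (simp add: aff_id)

lemma pmi_nth[simp]: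
  "pmi e1 e2 m n z $ 1 = of_int e1 * z$1 + 2 * of_int m"
  "pmi e1 e2 m n z $ 2 = of_int e2 * z$2 + 2 * of_int n"
  by (simp_all add: pmi_def)

lemma pm1_cases: "e \<in> {1, -1::int} \<longleftrightarrow> e = 1 \<or> e = -1" by auto

lemma pm1_sq: "e \<in> {1, -1::int} \<Longrightarrow> e * e = 1" by auto

lemma pm1_mult: "e \<in> {1, -1::int} \<Longrightarrow> f \<in> {1, -1::int} \<Longrightarrow> e * f \<in> {1, -1}" by auto

lemma pmi_inv:
  assumes "e1 \<in> {1,-1}" "e2 \<in> {1,-1}"
  shows "pmi e1 e2 m n \<circ> pmi e1 e2 (-e1*m) (-e2*n) = id"
    "pmi e1 e2 (-e1*m) (-e2*n) \<circ> pmi e1 e2 m n = id"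
proof -
  have s: "e1 * e1 = 1" "e2 * e2 = 1" using assms by (simp_all add: pm1_sq)
  show "pmi e1 e2 m n \<circ> pmi e1 e2 (-e1*m) (-e2*n) = id"
    unfolding pmi_comp pmi_id[symmetric] pmi_eq_iff using s by (simp add: algebra_simps)
  show "pmi e1 e2 (-e1*m) (-e2*n) \<circ> pmi e1 e2 m n = id"
    unfolding pmi_comp pmi_id[symmetric] pmi_eq_iff using s by (simp add: algebra_simps)
qed

lemma PP_I: "e1 \<in> {1,-1} \<Longrightarrow> e2 \<in> {1,-1} \<Longrightarrow> pmi e1 e2 m n \<in> PP"
  unfolding PP_def by blast

lemma PP_E: assumes "g \<in> PP"
  obtains e1 e2 m n where "e1 \<in> {1,-1}" "e2 \<in> {1,-1}" "g = pmi e1 e2 m n"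
  using assms unfolding PP_def by blast

lemma PP_id: "id \<in> PP"
  using PP_I[of 1 1 0 0] pmi_id by simp

lemma PP_comp: assumes "g \<in> PP" "h \<in> PP" shows "g \<circ> h \<in> PP"
proof -
  obtain e1 e2 m n where a: "e1 \<in> {1,-1}" "e2 \<in> {1,-1}" "g = pmi e1 e2 m n" using assms(1) by (rule PP_E)
  obtain f1 f2 k l where b: "f1 \<in> {1,-1}" "f2 \<in> {1,-1}" "h = pmi f1 f2 k l" using assms(2) by (rule PP_E)
  show ?thesis unfolding a(3) b(3) pmi_comp by (rule PP_I; rule pm1_mult) (use a b in auto)
qed

lemma PP_inv_ex: "g \<in> PP \<Longrightarrow> \<exists>g'\<in>PP. g \<circ> g' = id \<and> g' \<circ> g = id"
proof -
  assume "g \<in> PP"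
  then obtain e1 e2 m n where h: "e1 \<in> {1,-1}" "e2 \<in> {1,-1}" "g = pmi e1 e2 m n"
    by (rule PP_E)
  have "pmi e1 e2 (-e1*m) (-e2*n) \<in> PP" using h by (simp add: PP_I)
  then show ?thesis using pmi_inv[OF h(1,2)] h(3) by blast
qed

lemma PP_bij: "g \<in> PP \<Longrightarrow> bij g"
proof -
  assume "g \<in> PP"
  then obtain g' where "g \<circ> g' = id" "g' \<circ> g = id" using PP_inv_ex by blast
  then show "bij g" using o_bij by blast
qed

lemma PP_affine: "g \<in> PP \<Longrightarrow> affine_auto g"
proof -
  assume "g \<in> PP"
  then obtain e1 e2 m n where h: "e1 \<in> {1,-1}" "e2 \<in> {1,-1}" "g = pmi e1 e2 m n"
    by (rule PP_E)
  have "(of_int e1::real) * of_int e2 - 0 * 0 \<noteq> 0" using h(1,2) by auto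
  then show ?thesis unfolding affine_auto_aff h(3) pmi_def by blast
qed

lemma bij_inv_comp: "bij \<psi> \<Longrightarrow> \<psi> \<circ> inv_into UNIV \<psi> = id"
  by (metis bij_is_surj surj_iff)

lemma bij_comp_inv: "bij \<psi> \<Longrightarrow> inv_into UNIV \<psi> \<circ> \<psi> = id"
  by (simp add: bij_is_inj)

lemma conj_eqI: assumes "bij \<psi>" "\<psi> \<circ> g = h \<circ> \<psi>" shows "conj \<psi> g = h"
proof -
  have "conj \<psi> g = (\<psi> \<circ> g) \<circ> inv_into UNIV \<psi>" unfolding conj_def by (simp add: o_assoc)
  also have "\<dots> = h \<circ> (\<psi> \<circ> inv_into UNIV \<psi>)" using assms(2) by (simp add: o_assoc)
  finally show ?thesis using bij_inv_comp[OF assms(1)] by simp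
qed

lemma conj_eqD: assumes "bij \<psi>" "conj \<psi> g = h" shows "\<psi> \<circ> g = h \<circ> \<psi>"
proof -
  have "h \<circ> \<psi> = \<psi> \<circ> g \<circ> (inv_into UNIV \<psi> \<circ> \<psi>)" using assms(2) unfolding conj_def by (simp add: o_assoc)
  then show ?thesis using bij_comp_inv[OF assms(1)] by simp
qed

lemma conj_eq_iff: "bij \<psi> \<Longrightarrow> conj \<psi> g = h \<longleftrightarrow> \<psi> \<circ> g = h \<circ> \<psi>"
  using conj_eqI conj_eqD by blast

lemma conj_comp: assumes "bij \<psi>" shows "conj \<psi> (g \<circ> h) = conj \<psi> g \<circ> conj \<psi> h"
proof -
  have "conj \<psi> g \<circ> conj \<psi> h = \<psi> \<circ> g \<circ> (inv_into UNIV \<psi> \<circ> \<psi>) \<circ> h \<circ> inv_into UNIV \<psi>"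
    unfolding conj_def by (simp add: o_assoc)
  then show ?thesis using bij_comp_inv[OF assms] unfolding conj_def by (simp add: o_assoc)
qed

lemma conj_conj: assumes "bij \<alpha>" "bij \<beta>" shows "conj \<alpha> (conj \<beta> g) = conj (\<alpha> \<circ> \<beta>) g"
proof (rule conj_eqI[symmetric])
  show "bij (\<alpha> \<circ> \<beta>)" using assms by (rule bij_comp[rotated])
  have "\<alpha> \<circ> \<beta> \<circ> g = \<alpha> \<circ> (\<beta> \<circ> g)" by (simp add: o_assoc)
  also have "\<beta> \<circ> g = conj \<beta> g \<circ> \<beta>" using conj_eqD[OF assms(2) refl] .
  also have "\<alpha> \<circ> (conj \<beta> g \<circ> \<beta>) = (\<alpha> \<circ> conj \<beta> g) \<circ> \<beta>" by (simp add: o_assoc)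
  also have "\<alpha> \<circ> conj \<beta> g = conj \<alpha> (conj \<beta> g) \<circ> \<alpha>" using conj_eqD[OF assms(1) refl] .
  finally have "\<alpha> \<circ> \<beta> \<circ> g = conj \<alpha> (conj \<beta> g) \<circ> \<alpha> \<circ> \<beta>" .
  then show "\<alpha> \<circ> \<beta> \<circ> g = conj \<alpha> (conj \<beta> g) \<circ> (\<alpha> \<circ> \<beta>)" by (simp only: o_assoc)
qed

lemma conj_id[simp]: "conj id g = g"
  unfolding conj_def by simp

lemma conj_inj: assumes "bij \<psi>" "conj \<psi> g = conj \<psi> h" shows "g = h"
proof -
  have "\<psi> \<circ> g = \<psi> \<circ> h" using conj_eqD[OF assms(1) refl, of g] conj_eqD[OF assms(1) refl, of h] assms(2) by simp
  then have "inv_into UNIV \<psi> \<circ> (\<psi> \<circ> g) = inv_into UNIV \<psi> \<circ> (\<psi> \<circ> h)" by simp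
  then have "(inv_into UNIV \<psi> \<circ> \<psi>) \<circ> g = (inv_into UNIV \<psi> \<circ> \<psi>) \<circ> h" by (simp only: o_assoc)
  then show ?thesis using bij_comp_inv[OF assms(1)] by simp
qed

definition npred :: "emap \<Rightarrow> bool" where
  "npred \<psi> \<longleftrightarrow> (\<exists>p q r t b1 b2 :: int.
     ((q = 0 \<and> r = 0 \<and> p \<in> {1,-1} \<and> t \<in> {1,-1}) \<or> (p = 0 \<and> t = 0 \<and> q \<in> {1,-1} \<and> r \<in> {1,-1})) \<and>
     \<psi> = aff (of_int p) (of_int q) (of_int r) (of_int t) (of_int b1) (of_int b2))"

lemma aff_pmi: "aff p q r t b1 b2 \<circ> pmi e1 e2 m n =
  aff (p * of_int e1) (q * of_int e2) (r * of_int e1) (t * of_int e2)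
      (2 * p * of_int m + 2 * q * of_int n + b1) (2 * r * of_int m + 2 * t * of_int n + b2)"
  unfolding pmi_def aff_comp by (simp add: aff_eq_iff algebra_simps)

lemma pmi_aff: "pmi f1 f2 k l \<circ> aff p q r t b1 b2 =
  aff (of_int f1 * p) (of_int f1 * q) (of_int f2 * r) (of_int f2 * t)
      (of_int f1 * b1 + 2 * of_int k) (of_int f2 * b2 + 2 * of_int l)"
  unfolding pmi_def aff_comp by (simp add: aff_eq_iff algebra_simps)

lemma eqn: "aff p q r t b1 b2 \<circ> pmi e1 e2 m n = pmi f1 f2 k l \<circ> aff p q r t b1 b2 \<longleftrightarrow>
  p * of_int e1 = of_int f1 * p \<and> q * of_int e2 = of_int f1 * q \<and>
  r * of_int e1 = of_int f2 * r \<and> t * of_int e2 = of_int f2 * t \<and>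
  2 * p * of_int m + 2 * q * of_int n + b1 = of_int f1 * b1 + 2 * of_int k \<and>
  2 * r * of_int m + 2 * t * of_int n + b2 = of_int f2 * b2 + 2 * of_int l"
  unfolding aff_pmi pmi_aff aff_eq_iff by simp

lemma npred_affine: "npred \<psi> \<Longrightarrow> affine_auto \<psi> \<and> bij \<psi>"
proof -
  assume "npred \<psi>"
  then obtain p q r t b1 b2 :: int where h:
    "(q = 0 \<and> r = 0 \<and> p \<in> {1,-1} \<and> t \<in> {1,-1}) \<or> (p = 0 \<and> t = 0 \<and> q \<in> {1,-1} \<and> r \<in> {1,-1})"
    "\<psi> = aff (of_int p) (of_int q) (of_int r) (of_int t) (of_int b1) (of_int b2)"
    unfolding npred_def by blast
  have d: "(of_int p::real) * of_int t - of_int q * of_int r \<noteq> 0" using h(1) by auto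
  show ?thesis using d h(2) aff_bij[OF d] unfolding affine_auto_aff by blast
qed

lemma npred_conj_PP:
  assumes "npred \<psi>" "g \<in> PP"
  shows "conj \<psi> g \<in> PP"
proof -
  obtain p q r t b1 b2 :: int where h:
    "(q = 0 \<and> r = 0 \<and> p \<in> {1,-1} \<and> t \<in> {1,-1}) \<or> (p = 0 \<and> t = 0 \<and> q \<in> {1,-1} \<and> r \<in> {1,-1})"
    "\<psi> = aff (of_int p) (of_int q) (of_int r) (of_int t) (of_int b1) (of_int b2)"
    using assms(1) unfolding npred_def by blast
  obtain e1 e2 m n where g: "e1 \<in> {1,-1}" "e2 \<in> {1,-1}" "g = pmi e1 e2 m n" using assms(2) by (rule PP_E)
  have b: "bij \<psi>" using npred_affine[OF assms(1)] by blast
  from h(1) show ?thesis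
  proof
    assume d: "q = 0 \<and> r = 0 \<and> p \<in> {1,-1} \<and> t \<in> {1,-1}"
    define h where "h = pmi e1 e2 (p*m + (if e1 = 1 then 0 else b1)) (t*n + (if e2 = 1 then 0 else b2))"
    have "\<psi> \<circ> g = h \<circ> \<psi>" unfolding h(2) g(3) h_def eqn using d g(1,2) by auto
    then have "conj \<psi> g = h" by (rule conj_eqI[OF b])
    then show ?thesis using g(1,2) h_def PP_I by simp
  next
    assume d: "p = 0 \<and> t = 0 \<and> q \<in> {1,-1} \<and> r \<in> {1,-1}"
    define h where "h = pmi e2 e1 (q*n + (if e2 = 1 then 0 else b1)) (r*m + (if e1 = 1 then 0 else b2))"
    have "\<psi> \<circ> g = h \<circ> \<psi>" unfolding h(2) g(3) h_def eqn using d g(1,2) by auto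
    then have "conj \<psi> g = h" by (rule conj_eqI[OF b])
    then show ?thesis using g(1,2) h_def PP_I by simp
  qed
qed

lemma npred_inv:
  assumes "npred \<psi>"
  shows "\<exists>\<psi>'. npred \<psi>' \<and> \<psi>' \<circ> \<psi> = id \<and> \<psi> \<circ> \<psi>' = id"
proof -
  obtain p q r t b1 b2 :: int where h:
    "(q = 0 \<and> r = 0 \<and> p \<in> {1,-1} \<and> t \<in> {1,-1}) \<or> (p = 0 \<and> t = 0 \<and> q \<in> {1,-1} \<and> r \<in> {1,-1})"
    "\<psi> = aff (of_int p) (of_int q) (of_int r) (of_int t) (of_int b1) (of_int b2)"
    using assms(1) unfolding npred_def by blast
  from h(1) show ?thesis
  proof
    assume d: "q = 0 \<and> r = 0 \<and> p \<in> {1,-1} \<and> t \<in> {1,-1}"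
    define \<psi>' where "\<psi>' = aff (of_int p) (of_int 0) (of_int 0) (of_int t) (of_int (-p*b1)) (of_int (-t*b2))"
    have "npred \<psi>'" unfolding npred_def \<psi>'_def using d by blast
    moreover have "\<psi>' \<circ> \<psi> = id \<and> \<psi> \<circ> \<psi>' = id"
      unfolding \<psi>'_def h(2) aff_comp aff_id[symmetric] aff_eq_iff using d by auto
    ultimately show ?thesis by blast
  next
    assume d: "p = 0 \<and> t = 0 \<and> q \<in> {1,-1} \<and> r \<in> {1,-1}"
    define \<psi>' where "\<psi>' = aff (of_int 0) (of_int r) (of_int q) (of_int 0) (of_int (-r*b2)) (of_int (-q*b1))"
    have "npred \<psi>'" unfolding npred_def \<psi>'_def using d by blast
    moreover have "\<psi>' \<circ> \<psi> = id \<and> \<psi> \<circ> \<psi>' = id"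
      unfolding \<psi>'_def h(2) aff_comp aff_id[symmetric] aff_eq_iff using d by auto
    ultimately show ?thesis by blast
  qed
qed

lemma npred_NA: assumes "npred \<psi>" shows "\<psi> \<in> NA PP"
proof -
  obtain \<psi>' where i: "npred \<psi>'" "\<psi>' \<circ> \<psi> = id" "\<psi> \<circ> \<psi>' = id" using npred_inv[OF assms] by blast
  have b: "bij \<psi>" "bij \<psi>'" using npred_affine assms i(1) by blast+
  have "conj \<psi> ` PP \<subseteq> PP" using npred_conj_PP[OF assms] by blast
  moreover have "PP \<subseteq> conj \<psi> ` PP"
  proof
    fix h assume hP: "h \<in> PP"
    have "conj \<psi> (conj \<psi>' h) = conj (\<psi> \<circ> \<psi>') h" by (rule conj_conj[OF b])
    then have "conj \<psi> (conj \<psi>' h) = h" using i(3) by simp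
    moreover have "conj \<psi>' h \<in> PP" by (rule npred_conj_PP[OF i(1) hP])
    ultimately show "h \<in> conj \<psi> ` PP" by (metis image_eqI)
  qed
  ultimately show ?thesis unfolding NA_def using npred_affine[OF assms] by blast
qed

lemma pm1_real: "e \<in> {1,-1::int} \<Longrightarrow> (of_int e :: real) = 1 \<or> (of_int e :: real) = -1"
  by auto

lemma real_int_unit: "(of_int a :: real) * of_int b = 1 \<Longrightarrow> a \<in> {1,-1}"
proof -
  assume "(of_int a :: real) * of_int b = 1"
  then have "a * b = 1" by (metis of_int_1 of_int_eq_iff of_int_mult)
  then show ?thesis using pos_zmult_eq_1_iff_lemma by auto
qed

lemma NA_npred:
  assumes "\<psi> \<in> NA PP"
  shows "npred \<psi>"
proof -
  obtain p q r t b1 b2 where \<psi>: "p*t - q*r \<noteq> 0" "\<psi> = aff p q r t b1 b2"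
    using assms unfolding NA_def affine_auto_aff by blast
  have b: "bij \<psi>" using aff_bij[OF \<psi>(1)] \<psi>(2) by simp
  have fw: "\<exists>f1 f2 k l. f1 \<in> {1,-1} \<and> f2 \<in> {1,-1} \<and> \<psi> \<circ> pmi e1 e2 m n = pmi f1 f2 k l \<circ> \<psi>"
    if "e1 \<in> {1,-1}" "e2 \<in> {1,-1}" for e1 e2 m n
  proof -
    have "conj \<psi> (pmi e1 e2 m n) \<in> PP" using assms that PP_I unfolding NA_def by blast
    then obtain f1 f2 k l where "f1 \<in> {1,-1}" "f2 \<in> {1,-1}" "conj \<psi> (pmi e1 e2 m n) = pmi f1 f2 k l"
      by (rule PP_E)
    then show ?thesis using conj_eqD[OF b] by blast
  qed
  have bw: "\<exists>e1 e2 m n. e1 \<in> {1,-1} \<and> e2 \<in> {1,-1} \<and> \<psi> \<circ> pmi e1 e2 m n = pmi f1 f2 k l \<circ> \<psi>"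
    if "f1 \<in> {1,-1}" "f2 \<in> {1,-1}" for f1 f2 k l
  proof -
    have "pmi f1 f2 k l \<in> conj \<psi> ` PP" using assms that PP_I unfolding NA_def by blast
    then obtain g where "g \<in> PP" "pmi f1 f2 k l = conj \<psi> g" by blast
    then obtain e1 e2 m n where "e1 \<in> {1,-1}" "e2 \<in> {1,-1}" "conj \<psi> (pmi e1 e2 m n) = pmi f1 f2 k l"
      by (metis PP_E)
    then show ?thesis using conj_eqD[OF b] by blast
  qed
  note E = eqn[of p q r t b1 b2, folded \<psi>(2)]
  \<comment> \<open>translations: integrality of the linear part\<close>
  obtain f1 f2 k l where T1: "f1 \<in> {1,-1}" "f2 \<in> {1,-1}" "\<psi> \<circ> pmi 1 1 1 0 = pmi f1 f2 k l \<circ> \<psi>"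
    using fw[of 1 1 1 0] by auto
  have T1': "p = of_int f1 * p" "q = of_int f1 * q" "r = of_int f2 * r" "t = of_int f2 * t"
     "2 * p + b1 = of_int f1 * b1 + 2 * of_int k" "2 * r + b2 = of_int f2 * b2 + 2 * of_int l"
    using T1(3) unfolding E by simp_all
  have "f1 = 1" using T1(1) T1'(1,2) \<psi>(1) by auto
  have "f2 = 1" using T1(2) T1'(3,4) \<psi>(1) by auto
  have pI: "p = of_int k" using T1'(5) \<open>f1 = 1\<close> by simp
  have rI: "r = of_int l" using T1'(6) \<open>f2 = 1\<close> by simp
  obtain f1' f2' k' l' where T2: "f1' \<in> {1,-1}" "f2' \<in> {1,-1}" "\<psi> \<circ> pmi 1 1 0 1 = pmi f1' f2' k' l' \<circ> \<psi>"
    using fw[of 1 1 0 1] by auto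
  have T2': "p = of_int f1' * p" "q = of_int f1' * q" "r = of_int f2' * r" "t = of_int f2' * t"
     "2 * q + b1 = of_int f1' * b1 + 2 * of_int k'" "2 * t + b2 = of_int f2' * b2 + 2 * of_int l'"
    using T2(3) unfolding E by simp_all
  have "f1' = 1" using T2(1) T2'(1,2) \<psi>(1) by auto
  have "f2' = 1" using T2(2) T2'(3,4) \<psi>(1) by auto
  have qI: "q = of_int k'" using T2'(5) \<open>f1' = 1\<close> by simp
  have tI: "t = of_int l'" using T2'(6) \<open>f2' = 1\<close> by simp
  obtain g1 g2 u w where R1: "g1 \<in> {1,-1}" "g2 \<in> {1,-1}" "\<psi> \<circ> pmi (-1) 1 0 0 = pmi g1 g2 u w \<circ> \<psi>"
    using fw[of "-1" 1 0 0] by auto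
  have R1': "- p = of_int g1 * p" "q = of_int g1 * q" "- r = of_int g2 * r" "t = of_int g2 * t"
     "b1 = of_int g1 * b1 + 2 * of_int u" "b2 = of_int g2 * b2 + 2 * of_int w"
    using R1(3) unfolding E by simp_all
  obtain h1 h2 u' w' where R2: "h1 \<in> {1,-1}" "h2 \<in> {1,-1}" "\<psi> \<circ> pmi 1 (-1) 0 0 = pmi h1 h2 u' w' \<circ> \<psi>"
    using fw[of 1 "-1" 0 0] by auto
  have R2': "p = of_int h1 * p" "- q = of_int h1 * q" "r = of_int h2 * r" "- t = of_int h2 * t"
     "b1 = of_int h1 * b1 + 2 * of_int u'" "b2 = of_int h2 * b2 + 2 * of_int w'"
    using R2(3) unfolding E by simp_all
  obtain e1 e2 m n where S1: "e1 \<in> {1,-1}" "e2 \<in> {1,-1}" "\<psi> \<circ> pmi e1 e2 m n = pmi 1 1 1 0 \<circ> \<psi>"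
    using bw[of 1 1 1 0] by auto
  have S1': "2 * p * of_int m + 2 * q * of_int n + b1 = b1 + 2" "2 * r * of_int m + 2 * t * of_int n + b2 = b2"
    using S1(3) unfolding E by simp_all
  obtain e1' e2' m' n' where S2: "e1' \<in> {1,-1}" "e2' \<in> {1,-1}" "\<psi> \<circ> pmi e1' e2' m' n' = pmi 1 1 0 1 \<circ> \<psi>"
    using bw[of 1 1 0 1] by auto
  have S2': "2 * p * of_int m' + 2 * q * of_int n' + b1 = b1" "2 * r * of_int m' + 2 * t * of_int n' + b2 = b2 + 2"
    using S2(3) unfolding E by simp_all
  consider (diag) "q = 0" "r = 0" | (swap) "p = 0" "t = 0"
    using R1(1,2) R1'(1-4) \<psi>(1) by (auto simp: pm1_cases)
  then show ?thesis
  proof cases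
    case diag
    have "g1 = -1" using R1(1) R1'(1) \<psi>(1) diag by auto
    then have b1I: "b1 = of_int u" using R1'(5) by simp
    have "h2 = -1" using R2(2) R2'(4) \<psi>(1) diag by auto
    then have b2I: "b2 = of_int w'" using R2'(6) by simp
    have "(of_int k :: real) * of_int m = 1" using S1'(1) diag pI by simp
    then have ku: "k \<in> {1,-1}" by (rule real_int_unit)
    have "(of_int l' :: real) * of_int n' = 1" using S2'(2) diag tI by simp
    then have lu: "l' \<in> {1,-1}" by (rule real_int_unit)
    have "k' = 0" "l = 0" using diag qI rI by simp_all
    then show ?thesis unfolding npred_def \<psi>(2) pI qI rI tI b1I b2I using ku lu by blast
  next
    case swap
    have "g2 = -1" using R1(2) R1'(3) \<psi>(1) swap by auto
    then have b2I: "b2 = of_int w" using R1'(6) by simp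
    have "h1 = -1" using R2(1) R2'(2) \<psi>(1) swap by auto
    then have b1I: "b1 = of_int u'" using R2'(5) by simp
    have "(of_int k' :: real) * of_int n = 1" using S1'(1) swap qI by simp
    then have ku: "k' \<in> {1,-1}" by (rule real_int_unit)
    have "(of_int l :: real) * of_int m' = 1" using S2'(2) swap rI by simp
    then have lu: "l \<in> {1,-1}" by (rule real_int_unit)
    have "k = 0" "l' = 0" using swap pI tI by simp_all
    then show ?thesis unfolding npred_def \<psi>(2) pI qI rI tI b1I b2I using ku lu by blast
  qed
qed

lemma NA_PP_iff: "\<psi> \<in> NA PP \<longleftrightarrow> npred \<psi>"
  using NA_npred npred_NA by blast

lemma centralizer_PP:
  assumes "affine_auto \<epsilon>" "\<And>g. g \<in> PP \<Longrightarrow> \<epsilon> \<circ> g = g \<circ> \<epsilon>"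
  shows "\<epsilon> = id"
proof -
  obtain p q r t b1 b2 where \<epsilon>: "p*t - q*r \<noteq> 0" "\<epsilon> = aff p q r t b1 b2"
    using assms(1) unfolding affine_auto_aff by blast
  note E = eqn[of p q r t b1 b2, folded \<epsilon>(2)]
  have a: "\<epsilon> \<circ> pmi 1 1 1 0 = pmi 1 1 1 0 \<circ> \<epsilon>" by (rule assms(2)) (simp add: PP_I)
  have b: "\<epsilon> \<circ> pmi 1 1 0 1 = pmi 1 1 0 1 \<circ> \<epsilon>" by (rule assms(2)) (simp add: PP_I)
  have c: "\<epsilon> \<circ> pmi (-1) 1 0 0 = pmi (-1) 1 0 0 \<circ> \<epsilon>" by (rule assms(2)) (simp add: PP_I)
  have d: "\<epsilon> \<circ> pmi 1 (-1) 0 0 = pmi 1 (-1) 0 0 \<circ> \<epsilon>" by (rule assms(2)) (simp add: PP_I)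
  have "p = 1" "r = 0" using a unfolding E by simp_all
  moreover have "q = 0" "t = 1" using b unfolding E by simp_all
  moreover have "b1 = 0" using c \<open>q = 0\<close> unfolding E by simp
  moreover have "b2 = 0" using d \<open>r = 0\<close> unfolding E by simp
  ultimately show ?thesis using \<epsilon>(2) aff_id by simp
qed

definition R1 :: "int \<Rightarrow> emap" where "R1 m = pmi (-1) 1 m 0"
definition R2 :: "int \<Rightarrow> emap" where "R2 n = pmi 1 (-1) 0 n"

definition isrefl :: "emap \<Rightarrow> bool" where
  "isrefl g \<longleftrightarrow> g \<in> PP \<and> g \<circ> g = id \<and> g \<noteq> id \<and> (\<exists>h\<in>PP. h \<circ> g = g \<circ> h \<and> h \<circ> h \<noteq> id)"

lemma R1_PP: "R1 m \<in> PP" unfolding R1_def by (simp add: PP_I)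
lemma R2_PP: "R2 m \<in> PP" unfolding R2_def by (simp add: PP_I)

lemma R1R1: "R1 a \<circ> R1 b = R1 b \<circ> R1 a \<longleftrightarrow> a = b"
  unfolding R1_def pmi_comp pmi_eq_iff by auto
lemma R2R2: "R2 a \<circ> R2 b = R2 b \<circ> R2 a \<longleftrightarrow> a = b"
  unfolding R2_def pmi_comp pmi_eq_iff by auto
lemma R1R2: "R1 a \<circ> R2 b = R2 b \<circ> R1 a"
  unfolding R1_def R2_def pmi_comp pmi_eq_iff by auto
lemma R1_neq_R2: "R1 a \<noteq> R2 b"
  unfolding R1_def R2_def pmi_eq_iff by auto
lemma R1_inj: "R1 a = R1 b \<longleftrightarrow> a = b"
  unfolding R1_def pmi_eq_iff by auto
lemma R2_inj: "R2 a = R2 b \<longleftrightarrow> a = b"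
  unfolding R2_def pmi_eq_iff by auto
lemma R1_triple: "R1 a \<circ> (R1 b \<circ> R1 c) = R1 (a - b + c)"
  unfolding R1_def pmi_comp pmi_eq_iff by auto
lemma R2_triple: "R2 a \<circ> (R2 b \<circ> R2 c) = R2 (a - b + c)"
  unfolding R2_def pmi_comp pmi_eq_iff by auto

lemma isrefl_iff: "isrefl g \<longleftrightarrow> (\<exists>m. g = R1 m) \<or> (\<exists>n. g = R2 n)"
proof
  assume g: "isrefl g"
  then obtain e1 e2 m n where e: "e1 \<in> {1,-1}" "e2 \<in> {1,-1}" "g = pmi e1 e2 m n"
    unfolding isrefl_def by (metis PP_E)
  have "pmi e1 e2 m n \<circ> pmi e1 e2 m n = pmi 1 1 0 0" using g e(3) pmi_id unfolding isrefl_def by simp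
  then have sq: "e1 * m + m = 0" "e2 * n + n = 0" unfolding pmi_comp pmi_eq_iff by simp_all
  have ni: "g \<noteq> id" using g unfolding isrefl_def by blast
  obtain h where h: "h \<in> PP" "h \<circ> g = g \<circ> h" "h \<circ> h \<noteq> id" using g unfolding isrefl_def by blast
  obtain f1 f2 k l where hf: "f1 \<in> {1,-1}" "f2 \<in> {1,-1}" "h = pmi f1 f2 k l" using h(1) by (rule PP_E)
  have "\<not> (e1 = -1 \<and> e2 = -1)"
  proof
    assume ee: "e1 = -1 \<and> e2 = -1"
    have "f1 * m + k = -k + m" "f2 * n + l = -l + n"
      using h(2) unfolding e(3) hf(3) pmi_comp pmi_eq_iff using ee by auto
    then have "h \<circ> h = id" unfolding hf(3) pmi_comp pmi_id[symmetric] pmi_eq_iff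
      using hf(1,2) by auto
    then show False using h(3) by simp
  qed
  moreover have "\<not> (e1 = 1 \<and> e2 = 1)"
  proof
    assume ee: "e1 = 1 \<and> e2 = 1"
    then have "m = 0" "n = 0" using sq by auto
    then show False using ni ee e(3) pmi_id by simp
  qed
  ultimately show "(\<exists>m. g = R1 m) \<or> (\<exists>n. g = R2 n)"
    using e sq unfolding R1_def R2_def by auto
next
  assume "(\<exists>m. g = R1 m) \<or> (\<exists>n. g = R2 n)"
  then show "isrefl g"
  proof
    assume "\<exists>m. g = R1 m"
    then obtain m where g: "g = R1 m" by blast
    have "pmi 1 1 0 1 \<in> PP" by (simp add: PP_I)
    moreover have "pmi 1 1 0 1 \<circ> g = g \<circ> pmi 1 1 0 1" "pmi 1 1 0 1 \<circ> pmi 1 1 0 1 \<noteq> id"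
      unfolding g R1_def pmi_comp pmi_id[symmetric] pmi_eq_iff by simp_all
    moreover have "g \<circ> g = id" "g \<noteq> id"
      unfolding g R1_def pmi_comp pmi_id[symmetric] pmi_eq_iff by simp_all
    ultimately show "isrefl g" unfolding isrefl_def using g R1_PP by blast
  next
    assume "\<exists>n. g = R2 n"
    then obtain n where g: "g = R2 n" by blast
    have "pmi 1 1 1 0 \<in> PP" by (simp add: PP_I)
    moreover have "pmi 1 1 1 0 \<circ> g = g \<circ> pmi 1 1 1 0" "pmi 1 1 1 0 \<circ> pmi 1 1 1 0 \<noteq> id"
      unfolding g R2_def pmi_comp pmi_id[symmetric] pmi_eq_iff by simp_all
    moreover have "g \<circ> g = id" "g \<noteq> id"
      unfolding g R2_def pmi_comp pmi_id[symmetric] pmi_eq_iff by simp_all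
    ultimately show "isrefl g" unfolding isrefl_def using g R2_PP by blast
  qed
qed

lemma fam_affine:
  fixes \<mu> :: "int \<Rightarrow> int"
  assumes "\<And>a b c. \<mu> (a - b + c) = \<mu> a - \<mu> b + \<mu> c"
  shows "\<mu> m = \<mu> 0 + m * (\<mu> 1 - \<mu> 0)"
proof (induction m rule: int_induct[where k = 0])
  case base then show ?case by simp
next
  case (step1 i)
  have "\<mu> (i + 1) = \<mu> i - \<mu> 0 + \<mu> 1" using assms[of i 0 1] by simp
  then show ?case using step1 by (simp add: algebra_simps)
next
  case (step2 i)
  have "\<mu> (i - 1) = \<mu> i - \<mu> 1 + \<mu> 0" using assms[of i 1 0] by simp
  then show ?case using step2 by (simp add: algebra_simps)
qed

locale autP =
  fixes f :: "emap \<Rightarrow> emap"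
  assumes hom: "\<And>a b. a \<in> PP \<Longrightarrow> b \<in> PP \<Longrightarrow> f (a \<circ> b) = f a \<circ> f b"
    and img: "f ` PP = PP"
    and inj: "inj_on f PP"
begin

lemma f_PP: "g \<in> PP \<Longrightarrow> f g \<in> PP" using img by blast

lemma f_id: "f id = id"
proof -
  have "f id = f id \<circ> f id" using hom[OF PP_id PP_id] by simp
  moreover obtain g' where "g' \<circ> f id = id" using PP_inv_ex[OF f_PP[OF PP_id]] by blast
  ultimately have "g' \<circ> (f id \<circ> f id) = g' \<circ> f id" by simp
  then have "(g' \<circ> f id) \<circ> f id = g' \<circ> f id" by (simp only: o_assoc)
  then show ?thesis using \<open>g' \<circ> f id = id\<close> by simp
qed

lemma f_eq: "a \<in> PP \<Longrightarrow> b \<in> PP \<Longrightarrow> f a = f b \<longleftrightarrow> a = b"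
  using inj by (auto simp: inj_on_def)

lemma f_isrefl: assumes "g \<in> PP" shows "isrefl (f g) \<longleftrightarrow> isrefl g"
proof
  assume r: "isrefl (f g)"
  have "f (g \<circ> g) = f id" using r hom[OF assms assms] f_id unfolding isrefl_def by simp
  then have gg: "g \<circ> g = id" using f_eq[OF PP_comp[OF assms assms] PP_id] by simp
  have "g \<noteq> id" using r f_id unfolding isrefl_def by auto
  moreover obtain h' where h': "h' \<in> PP" "h' \<circ> f g = f g \<circ> h'" "h' \<circ> h' \<noteq> id" using r unfolding isrefl_def by blast
  obtain h where h: "h \<in> PP" "h' = f h" using h'(1) img by blast
  have "f (h \<circ> g) = f (g \<circ> h)" using h'(2) h hom assms by simp
  then have "h \<circ> g = g \<circ> h" using f_eq PP_comp h(1) assms by blast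
  moreover have "h \<circ> h \<noteq> id" using h'(3) h hom[OF h(1) h(1)] f_id by auto
  ultimately show "isrefl g" unfolding isrefl_def using assms gg h(1) by blast
next
  assume r: "isrefl g"
  have "f g \<circ> f g = id" using r hom[OF assms assms] f_id unfolding isrefl_def by simp
  moreover have "f g \<noteq> id" using r f_id f_eq[OF assms PP_id] unfolding isrefl_def by auto
  moreover obtain h where h: "h \<in> PP" "h \<circ> g = g \<circ> h" "h \<circ> h \<noteq> id" using r unfolding isrefl_def by blast
  have "f h \<circ> f g = f g \<circ> f h" using hom h assms by (metis)
  moreover have "f h \<circ> f h \<noteq> id" using h f_id f_eq[OF PP_comp[OF h(1) h(1)] PP_id] hom by auto
  ultimately show "isrefl (f g)" unfolding isrefl_def using f_PP[OF assms] f_PP[OF h(1)] by blast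
qed

lemma f_comm: "a \<in> PP \<Longrightarrow> b \<in> PP \<Longrightarrow> f a \<circ> f b = f b \<circ> f a \<longleftrightarrow> a \<circ> b = b \<circ> a"
  using hom f_eq PP_comp by metis

lemma caseA:
  assumes A: "f (R1 0) = R1 k0"
  shows "\<exists>\<psi>. npred \<psi> \<and> (\<forall>g\<in>PP. f g = conj \<psi> g)"
proof -
  have r1: "\<exists>j. f (R1 m) = R1 j" for m
  proof -
    have "isrefl (f (R1 m))" using f_isrefl[OF R1_PP] isrefl_iff by blast
    then consider j where "f (R1 m) = R1 j" | j where "f (R1 m) = R2 j" unfolding isrefl_iff by blast
    then show ?thesis
    proof cases
      case (2 j)
      have "f (R1 m) \<circ> f (R1 0) = f (R1 0) \<circ> f (R1 m)" using 2 A R1R2 by simp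
      then have "m = 0" using f_comm[OF R1_PP R1_PP] R1R1 by blast
      then show ?thesis using A by blast
    qed blast
  qed
  have r2: "\<exists>j. f (R2 n) = R2 j" for n
  proof -
    have "isrefl (f (R2 n))" using f_isrefl[OF R2_PP] isrefl_iff by blast
    then consider j where "f (R2 n) = R1 j" | j where "f (R2 n) = R2 j" unfolding isrefl_iff by blast
    then show ?thesis
    proof cases
      case (1 j)
      have "f (R2 n) \<circ> f (R1 0) = f (R1 0) \<circ> f (R2 n)" using f_comm[OF R2_PP R1_PP] R1R2 by metis
      then have "j = k0" using 1 A R1R1 by simp
      then have "f (R2 n) = f (R1 0)" using 1 A by simp
      then show ?thesis using f_eq[OF R2_PP R1_PP] R1_neq_R2 by metis
    qed blast
  qed
  obtain \<mu> where mu: "\<And>m. f (R1 m) = R1 (\<mu> m)" using r1 by metis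
  obtain \<nu> where nu: "\<And>n. f (R2 n) = R2 (\<nu> n)" using r2 by metis
  have mu_aff: "\<mu> (a - b + c) = \<mu> a - \<mu> b + \<mu> c" for a b c
  proof -
    have "f (R1 (a - b + c)) = f (R1 a) \<circ> (f (R1 b) \<circ> f (R1 c))"
      using R1_triple[of a b c] hom R1_PP PP_comp by metis
    then show ?thesis using mu R1_triple R1_inj by metis
  qed
  have nu_aff: "\<nu> (a - b + c) = \<nu> a - \<nu> b + \<nu> c" for a b c
  proof -
    have "f (R2 (a - b + c)) = f (R2 a) \<circ> (f (R2 b) \<circ> f (R2 c))"
      using R2_triple[of a b c] hom R2_PP PP_comp by metis
    then show ?thesis using nu R2_triple R2_inj by metis
  qed
  define \<delta> where "\<delta> = \<mu> 1 - \<mu> 0"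
  define \<delta>' where "\<delta>' = \<nu> 1 - \<nu> 0"
  have muf: "\<mu> m = \<mu> 0 + m * \<delta>" for m unfolding \<delta>_def by (rule fam_affine[OF mu_aff])
  have nuf: "\<nu> m = \<nu> 0 + m * \<delta>'" for m unfolding \<delta>'_def by (rule fam_affine[OF nu_aff])
  have d1: "\<delta> \<in> {1,-1}"
  proof -
    obtain g where g: "g \<in> PP" "R1 (\<mu> 0 + 1) = f g" using img R1_PP by (metis imageE)
    have "isrefl g" using f_isrefl[OF g(1)] g(2) isrefl_iff by metis
    then consider m where "g = R1 m" | n where "g = R2 n" unfolding isrefl_iff by blast
    then show ?thesis
    proof cases
      case (1 m)
      then have "\<mu> 0 + 1 = \<mu> 0 + m * \<delta>" using g(2) mu muf R1_inj by metis
      then have "m * \<delta> = 1" by simp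
      then show ?thesis using pos_zmult_eq_1_iff_lemma[of \<delta> m] by (simp add: mult.commute)
    next
      case (2 n)
      then show ?thesis using g(2) nu R1_neq_R2 by metis
    qed
  qed
  have d2: "\<delta>' \<in> {1,-1}"
  proof -
    obtain g where g: "g \<in> PP" "R2 (\<nu> 0 + 1) = f g" using img R2_PP by (metis imageE)
    have "isrefl g" using f_isrefl[OF g(1)] g(2) isrefl_iff by metis
    then consider m where "g = R1 m" | n where "g = R2 n" unfolding isrefl_iff by blast
    then show ?thesis
    proof cases
      case (2 m)
      then have "\<nu> 0 + 1 = \<nu> 0 + m * \<delta>'" using g(2) nu nuf R2_inj by metis
      then have "m * \<delta>' = 1" by simp
      then show ?thesis using pos_zmult_eq_1_iff_lemma[of \<delta>' m] by (simp add: mult.commute)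
    next
      case (1 n)
      then show ?thesis using g(2) mu R1_neq_R2 by metis
    qed
  qed
  define \<psi> where "\<psi> = aff (of_int \<delta>) (of_int 0) (of_int 0) (of_int \<delta>') (of_int (\<mu> 0)) (of_int (\<nu> 0))"
  have np: "npred \<psi>" unfolding npred_def \<psi>_def using d1 d2 by blast
  have b: "bij \<psi>" using npred_affine[OF np] by blast
  have c1: "conj \<psi> (R1 m) = R1 (\<mu> m)" for m
    by (rule conj_eqI[OF b]) (simp add: \<psi>_def R1_def eqn muf[of m] algebra_simps)
  have c2: "conj \<psi> (R2 m) = R2 (\<nu> m)" for m
    by (rule conj_eqI[OF b]) (simp add: \<psi>_def R2_def eqn nuf[of m] algebra_simps)
  have fR1: "f (R1 m) = conj \<psi> (R1 m)" for m using c1 mu by simp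
  have fR2: "f (R2 m) = conj \<psi> (R2 m)" for m using c2 nu by simp
  have "f g = conj \<psi> g" if g: "g \<in> PP" for g
  proof -
    obtain e1 e2 m n where e: "e1 \<in> {1,-1}" "e2 \<in> {1,-1}" "g = pmi e1 e2 m n" using g by (rule PP_E)
    have T1: "pmi 1 1 m 0 = R1 m \<circ> R1 0" unfolding R1_def pmi_comp by simp
    have T2: "pmi 1 1 0 n = R2 n \<circ> R2 0" unfolding R2_def pmi_comp by simp
    have X: "pmi e1 1 m 0 = R1 m \<or> pmi e1 1 m 0 = R1 m \<circ> R1 0" using e(1) T1 R1_def by auto
    have Y: "pmi 1 e2 0 n = R2 n \<or> pmi 1 e2 0 n = R2 n \<circ> R2 0" using e(2) T2 R2_def by auto
    have G: "g = pmi e1 1 m 0 \<circ> pmi 1 e2 0 n" unfolding e(3) pmi_comp by simp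
    have fX: "f (pmi e1 1 m 0) = conj \<psi> (pmi e1 1 m 0)"
      using X fR1 hom[OF R1_PP R1_PP] conj_comp[OF b] by auto
    have fY: "f (pmi 1 e2 0 n) = conj \<psi> (pmi 1 e2 0 n)"
      using Y fR2 hom[OF R2_PP R2_PP] conj_comp[OF b] by auto
    have PX: "pmi e1 1 m 0 \<in> PP" "pmi 1 e2 0 n \<in> PP" using e by (simp_all add: PP_I)
    show ?thesis unfolding G hom[OF PX] fX fY conj_comp[OF b] ..
  qed
  then show ?thesis using np by blast
qed

end

definition swp :: emap where "swp = aff 0 1 1 0 0 0"

lemma swp_npred: "npred swp"
  unfolding npred_def swp_def by (rule exI[of _ 0], rule exI[of _ 1], rule exI[of _ 1], rule exI[of _ 0],
    rule exI[of _ 0], rule exI[of _ 0]) simp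

lemma swp_bij: "bij swp" using npred_affine[OF swp_npred] by blast

lemma swp_swp: "swp \<circ> swp = id"
  unfolding swp_def aff_comp aff_id[symmetric] by simp

lemma swp_conj_pmi: "conj swp (pmi e1 e2 m n) = pmi e2 e1 n m"
  by (rule conj_eqI[OF swp_bij]) (simp add: swp_def eqn)

lemma swp_conj_conj: "conj swp (conj swp g) = g"
  using conj_conj[OF swp_bij swp_bij] swp_swp by simp

lemma swp_comp_npred: "npred \<psi> \<Longrightarrow> npred (swp \<circ> \<psi>)"
proof -
  assume "npred \<psi>"
  then obtain p q r t b1 b2 :: int where h:
    "(q = 0 \<and> r = 0 \<and> p \<in> {1,-1} \<and> t \<in> {1,-1}) \<or> (p = 0 \<and> t = 0 \<and> q \<in> {1,-1} \<and> r \<in> {1,-1})"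
    "\<psi> = aff (of_int p) (of_int q) (of_int r) (of_int t) (of_int b1) (of_int b2)"
    unfolding npred_def by blast
  have "swp \<circ> \<psi> = aff (of_int r) (of_int t) (of_int p) (of_int q) (of_int b2) (of_int b1)"
    unfolding swp_def h(2) aff_comp by simp
  then show ?thesis unfolding npred_def using h(1) by blast
qed

lemma autP_classify:
  assumes "autP f"
  shows "\<exists>\<psi>. npred \<psi> \<and> (\<forall>g\<in>PP. f g = conj \<psi> g)"
proof -
  interpret autP f by fact
  have "isrefl (f (R1 0))" using f_isrefl[OF R1_PP] isrefl_iff by blast
  then consider k0 where "f (R1 0) = R1 k0" | k0 where "f (R1 0) = R2 k0" unfolding isrefl_iff by blast
  then show ?thesis
  proof cases
    case (1 k0) then show ?thesis by (rule caseA)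
  next
    case (2 k0)
    define f' where "f' = (\<lambda>g. conj swp (f g))"
    have sP: "conj swp ` PP = PP" using npred_NA[OF swp_npred] unfolding NA_def by blast
    have "autP f'"
    proof
      show "f' (a \<circ> b) = f' a \<circ> f' b" if "a \<in> PP" "b \<in> PP" for a b
        unfolding f'_def hom[OF that] conj_comp[OF swp_bij] ..
      show "f' ` PP = PP" unfolding f'_def using img sP by (metis image_image)
      show "inj_on f' PP" unfolding f'_def using inj conj_inj[OF swp_bij]
        by (simp add: inj_on_def)
    qed
    moreover have "f' (R1 0) = R1 k0" unfolding f'_def using 2 by (simp add: R1_def R2_def swp_conj_pmi)
    ultimately obtain \<psi>' where \<psi>': "npred \<psi>'" "\<forall>g\<in>PP. f' g = conj \<psi>' g"
      using autP.caseA by blast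
    have "f g = conj (swp \<circ> \<psi>') g" if "g \<in> PP" for g
    proof -
      have "f g = conj swp (f' g)" unfolding f'_def swp_conj_conj ..
      also have "\<dots> = conj swp (conj \<psi>' g)" using \<psi>'(2) that by simp
      also have "\<dots> = conj (swp \<circ> \<psi>') g" using conj_conj[OF swp_bij] npred_affine[OF \<psi>'(1)] by blast
      finally show ?thesis .
    qed
    then show ?thesis using swp_comp_npred[OF \<psi>'(1)] by blast
  qed
qed

definition sqc :: "real \<Rightarrow> real \<Rightarrow> real \<Rightarrow> pt set" where
  "sqc h1 h2 \<rho> = {z. \<bar>z$1 - h1\<bar> \<le> \<rho> \<and> \<bar>z$2 - h2\<bar> \<le> \<rho>}"

definition corner :: "pt set \<Rightarrow> pt \<Rightarrow> bool" where
  "corner C z \<longleftrightarrow> z \<in> C \<and> (\<forall>a\<in>C. \<forall>b\<in>C. z = (1/2) *\<^sub>R (a + b) \<longrightarrow> a = b)"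

lemma aff_mid: "aff p q r t b1 b2 ((1/2) *\<^sub>R (a + b)) = (1/2) *\<^sub>R (aff p q r t b1 b2 a + aff p q r t b1 b2 b)"
  by (simp add: vec2_eq_iff algebra_simps)

lemma corner_image:
  assumes inj: "inj f" and mid: "\<And>a b. f ((1/2) *\<^sub>R (a + b)) = (1/2) *\<^sub>R (f a + f b)"
    and img: "f ` C = D" and c: "corner C z"
  shows "corner D (f z)"
  unfolding corner_def
proof (intro conjI ballI impI)
  show "f z \<in> D" using c img unfolding corner_def by blast
  fix a b assume ab: "a \<in> D" "b \<in> D" "f z = (1/2) *\<^sub>R (a + b)"
  obtain a' b' where a': "a' \<in> C" "a = f a'" and b': "b' \<in> C" "b = f b'" using ab img by blast
  have "f z = f ((1/2) *\<^sub>R (a' + b'))" using ab(3) a' b' mid by simp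
  then have "z = (1/2) *\<^sub>R (a' + b')" using inj by (simp add: inj_eq)
  then have "a' = b'" using c a'(1) b'(1) unfolding corner_def by blast
  then show "a = b" using a' b' by simp
qed

lemma corner_sqc:
  assumes "\<rho> > 0" "corner (sqc h1 h2 \<rho>) z"
  shows "\<bar>z$1 - h1\<bar> = \<rho> \<and> \<bar>z$2 - h2\<bar> = \<rho>"
proof (rule ccontr)
  assume n: "\<not> (\<bar>z$1 - h1\<bar> = \<rho> \<and> \<bar>z$2 - h2\<bar> = \<rho>)"
  have z: "\<bar>z$1 - h1\<bar> \<le> \<rho>" "\<bar>z$2 - h2\<bar> \<le> \<rho>" using assms(2) unfolding corner_def sqc_def by auto
  show False
  proof (cases "\<bar>z$1 - h1\<bar> = \<rho>")
    case False
    then have lt: "\<bar>z$1 - h1\<bar> < \<rho>" using z by simp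
    define \<delta> where "\<delta> = \<rho> - \<bar>z$1 - h1\<bar>"
    have \<delta>: "\<delta> > 0" using lt by (simp add: \<delta>_def)
    define a where "a = z + vector [\<delta>, 0]"
    define b where "b = z - vector [\<delta>, 0]"
    have "a \<in> sqc h1 h2 \<rho>" "b \<in> sqc h1 h2 \<rho>" using z unfolding a_def b_def sqc_def \<delta>_def by auto
    moreover have "z = (1/2) *\<^sub>R (a + b)" unfolding a_def b_def by (simp add: vec2_eq_iff)
    moreover have "a \<noteq> b" using \<delta> unfolding a_def b_def by (simp add: vec2_eq_iff)
    ultimately show False using assms(2) unfolding corner_def by blast
  next
    case True
    then have "\<bar>z$2 - h2\<bar> \<noteq> \<rho>" using n by simp
    then have lt: "\<bar>z$2 - h2\<bar> < \<rho>" using z by simp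
    define \<delta> where "\<delta> = \<rho> - \<bar>z$2 - h2\<bar>"
    have \<delta>: "\<delta> > 0" using lt by (simp add: \<delta>_def)
    define a where "a = z + vector [0, \<delta>]"
    define b where "b = z - vector [0, \<delta>]"
    have "a \<in> sqc h1 h2 \<rho>" "b \<in> sqc h1 h2 \<rho>" using z unfolding a_def b_def sqc_def \<delta>_def by auto
    moreover have "z = (1/2) *\<^sub>R (a + b)" unfolding a_def b_def by (simp add: vec2_eq_iff)
    moreover have "a \<noteq> b" using \<delta> unfolding a_def b_def by (simp add: vec2_eq_iff)
    ultimately show False using assms(2) unfolding corner_def by blast
  qed
qed

lemma sqc_corner:
  assumes "\<rho> > 0" "e1 \<in> {1,-1}" "e2 \<in> {1,-1}"
  shows "corner (sqc h1 h2 \<rho>) (vector [h1 + e1 * \<rho>, h2 + e2 * \<rho>])"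
  unfolding corner_def
proof (intro conjI ballI impI)
  show "vector [h1 + e1 * \<rho>, h2 + e2 * \<rho>] \<in> sqc h1 h2 \<rho>" using assms unfolding sqc_def by auto
  fix a b assume ab: "a \<in> sqc h1 h2 \<rho>" "b \<in> sqc h1 h2 \<rho>"
    "vector [h1 + e1 * \<rho>, h2 + e2 * \<rho>] = (1/2) *\<^sub>R (a + b)"
  have 1: "a$1 + b$1 = 2 * (h1 + e1 * \<rho>)" "a$2 + b$2 = 2 * (h2 + e2 * \<rho>)"
    using ab(3) by (simp_all add: vec2_eq_iff)
  have "a$1 = b$1" using 1(1) ab(1,2) assms(2) unfolding sqc_def by auto
  moreover have "a$2 = b$2" using 1(2) ab(1,2) assms(3) unfolding sqc_def by auto
  ultimately show "a = b" by (simp add: vec2_eq_iff)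
qed

lemma abs_four:
  fixes Y a b K :: real
  assumes "\<bar>Y + a\<bar> = K" "\<bar>Y - a\<bar> = K"
  shows "Y * a = 0"
proof -
  have "(Y + a)^2 = (Y - a)^2" using assms by (metis power2_abs)
  then show ?thesis by (simp add: power2_eq_square algebra_simps)
qed

lemma corner_lemma:
  assumes d: "p*t - q*r \<noteq> 0" and \<rho>: "\<rho> > 0" "\<rho>' > 0"
    and img: "aff p q r t b1 b2 ` sqc h1 h2 \<rho> = sqc h1' h2' \<rho>'"
  shows "aff p q r t b1 b2 (vector [h1, h2]) = vector [h1', h2'] \<and>
    ((q = 0 \<and> r = 0 \<and> \<bar>p\<bar> = \<rho>'/\<rho> \<and> \<bar>t\<bar> = \<rho>'/\<rho>) \<or> (p = 0 \<and> t = 0 \<and> \<bar>q\<bar> = \<rho>'/\<rho> \<and> \<bar>r\<bar> = \<rho>'/\<rho>))"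
proof -
  let ?f = "aff p q r t b1 b2"
  have inj: "inj ?f" using aff_bij[OF d] bij_is_inj by blast
  have C: "\<bar>?f (vector [h1 + e1 * \<rho>, h2 + e2 * \<rho>]) $ 1 - h1'\<bar> = \<rho>' \<and>
           \<bar>?f (vector [h1 + e1 * \<rho>, h2 + e2 * \<rho>]) $ 2 - h2'\<bar> = \<rho>'"
    if "e1 \<in> {1,-1}" "e2 \<in> {1,-1}" for e1 e2
    using corner_sqc[OF \<rho>(2) corner_image[OF inj aff_mid img sqc_corner[OF \<rho>(1) that]]] .
  define Y1 where "Y1 = p*h1 + q*h2 + b1 - h1'"
  define Y2 where "Y2 = r*h1 + t*h2 + b2 - h2'"
  have c1: "\<bar>Y1 + \<rho>*(e1*p + e2*q)\<bar> = \<rho>'" "\<bar>Y2 + \<rho>*(e1*r + e2*t)\<bar> = \<rho>'"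
    if "e1 \<in> {1,-1}" "e2 \<in> {1,-1}" for e1 e2
    using C[OF that] unfolding Y1_def Y2_def by (simp_all add: algebra_simps)
  have a1: "\<bar>Y1 + \<rho>*(p + q)\<bar> = \<rho>'" "\<bar>Y1 - \<rho>*(p + q)\<bar> = \<rho>'"
    "\<bar>Y1 + \<rho>*(p - q)\<bar> = \<rho>'" "\<bar>Y1 - \<rho>*(p - q)\<bar> = \<rho>'"
    using c1(1)[of 1 1] c1(1)[of "-1" "-1"] c1(1)[of 1 "-1"] c1(1)[of "-1" 1] by (simp_all add: algebra_simps)
  have a2: "\<bar>Y2 + \<rho>*(r + t)\<bar> = \<rho>'" "\<bar>Y2 - \<rho>*(r + t)\<bar> = \<rho>'"
    "\<bar>Y2 + \<rho>*(r - t)\<bar> = \<rho>'" "\<bar>Y2 - \<rho>*(r - t)\<bar> = \<rho>'"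
    using c1(2)[of 1 1] c1(2)[of "-1" "-1"] c1(2)[of 1 "-1"] c1(2)[of "-1" 1] by (simp_all add: algebra_simps)
  have Y1: "Y1 = 0"
  proof (rule ccontr)
    assume "Y1 \<noteq> 0"
    then have "\<rho>*(p+q) = 0" "\<rho>*(p-q) = 0" using abs_four[OF a1(1,2)] abs_four[OF a1(3,4)] by simp_all
    then have "p = 0" "q = 0" using \<rho>(1) by simp_all
    then show False using d by simp
  qed
  have Y2: "Y2 = 0"
  proof (rule ccontr)
    assume "Y2 \<noteq> 0"
    then have "\<rho>*(r+t) = 0" "\<rho>*(r-t) = 0" using abs_four[OF a2(1,2)] abs_four[OF a2(3,4)] by simp_all
    then have "r = 0" "t = 0" using \<rho>(1) by simp_all
    then show False using d by simp
  qed
  have "\<rho> * \<bar>p + q\<bar> = \<rho>'" "\<rho> * \<bar>p - q\<bar> = \<rho>'" "\<rho> * \<bar>r + t\<bar> = \<rho>'" "\<rho> * \<bar>r - t\<bar> = \<rho>'"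
    using a1(1,3) a2(1,3) Y1 Y2 \<rho>(1) by (simp_all add: abs_mult)
  then have pq: "\<bar>p + q\<bar> = \<rho>'/\<rho>" "\<bar>p - q\<bar> = \<rho>'/\<rho>" and rt: "\<bar>r + t\<bar> = \<rho>'/\<rho>" "\<bar>r - t\<bar> = \<rho>'/\<rho>"
    using \<rho>(1) by (simp_all add: field_simps)
  have "p * q = 0" using abs_four[of 0 "p+q" "\<rho>'/\<rho>"] abs_four[of p q "\<rho>'/\<rho>"] pq by (simp add: abs_minus_commute)
  moreover have "r * t = 0" using abs_four[of r t "\<rho>'/\<rho>"] rt by (simp add: abs_minus_commute)
  ultimately have "(q = 0 \<and> r = 0 \<and> \<bar>p\<bar> = \<rho>'/\<rho> \<and> \<bar>t\<bar> = \<rho>'/\<rho>) \<or> (p = 0 \<and> t = 0 \<and> \<bar>q\<bar> = \<rho>'/\<rho> \<and> \<bar>r\<bar> = \<rho>'/\<rho>)"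
    using pq rt d by auto
  moreover have "?f (vector [h1, h2]) = vector [h1', h2']" using Y1 Y2 unfolding Y1_def Y2_def
    by (simp add: vec2_eq_iff)
  ultimately show ?thesis by blast
qed

definition sqo :: "real \<Rightarrow> pt set" where
  "sqo s = {z. \<bar>z$1\<bar> < s \<and> \<bar>z$2\<bar> < s}"

lemma aff_lin_comb:
  "aff p q r t b1 b2 (l *\<^sub>R y) = l *\<^sub>R aff p q r t b1 b2 y + (1 - l) *\<^sub>R aff p q r t b1 b2 0"
  by (simp add: vec2_eq_iff algebra_simps)

lemma aff_add_dir:
  "aff p q r t b1 b2 (y + \<tau> *\<^sub>R w) = aff p q r t b1 b2 y + \<tau> *\<^sub>R vector [p * w$1 + q * w$2, r * w$1 + t * w$2]"
  "aff p q r t b1 b2 (y - \<tau> *\<^sub>R w) = aff p q r t b1 b2 y - \<tau> *\<^sub>R vector [p * w$1 + q * w$2, r * w$1 + t * w$2]"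
  by (simp_all add: vec2_eq_iff algebra_simps)

lemma aff_shift1:
  assumes "p*t - q*r \<noteq> 0"
  shows "aff p q r t b1 b2 (y + \<tau> *\<^sub>R vector [t/(p*t - q*r), -r/(p*t - q*r)]) = aff p q r t b1 b2 y + vector [\<tau>, 0]"
    "aff p q r t b1 b2 (y - \<tau> *\<^sub>R vector [t/(p*t - q*r), -r/(p*t - q*r)]) = aff p q r t b1 b2 y - vector [\<tau>, 0]"
proof -
  have e: "p * (t/(p*t - q*r)) + q * (-r/(p*t - q*r)) = 1" "r * (t/(p*t - q*r)) + t * (-r/(p*t - q*r)) = 0"
    using assms by (simp_all add: divide_simps; simp add: algebra_simps)+
  show "aff p q r t b1 b2 (y + \<tau> *\<^sub>R vector [t/(p*t - q*r), -r/(p*t - q*r)]) = aff p q r t b1 b2 y + vector [\<tau>, 0]"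
    "aff p q r t b1 b2 (y - \<tau> *\<^sub>R vector [t/(p*t - q*r), -r/(p*t - q*r)]) = aff p q r t b1 b2 y - vector [\<tau>, 0]"
    unfolding aff_add_dir vector_2 e by (simp_all add: vec2_eq_iff)
qed

lemma aff_shift2:
  assumes "p*t - q*r \<noteq> 0"
  shows "aff p q r t b1 b2 (y + \<tau> *\<^sub>R vector [-q/(p*t - q*r), p/(p*t - q*r)]) = aff p q r t b1 b2 y + vector [0, \<tau>]"
    "aff p q r t b1 b2 (y - \<tau> *\<^sub>R vector [-q/(p*t - q*r), p/(p*t - q*r)]) = aff p q r t b1 b2 y - vector [0, \<tau>]"
proof -
  have e: "p * (-q/(p*t - q*r)) + q * (p/(p*t - q*r)) = 0" "r * (-q/(p*t - q*r)) + t * (p/(p*t - q*r)) = 1"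
    using assms by (simp_all add: divide_simps; simp add: algebra_simps)+
  show "aff p q r t b1 b2 (y + \<tau> *\<^sub>R vector [-q/(p*t - q*r), p/(p*t - q*r)]) = aff p q r t b1 b2 y + vector [0, \<tau>]"
    "aff p q r t b1 b2 (y - \<tau> *\<^sub>R vector [-q/(p*t - q*r), p/(p*t - q*r)]) = aff p q r t b1 b2 y - vector [0, \<tau>]"
    unfolding aff_add_dir vector_2 e by (simp_all add: vec2_eq_iff)
qed

lemma small_step:
  assumes "y \<in> sqo s"
  shows "\<exists>\<tau>>0. y + \<tau> *\<^sub>R w \<in> sqo s \<and> y - \<tau> *\<^sub>R w \<in> sqo s"
proof -
  define m where "m = min (s - \<bar>y$1\<bar>) (s - \<bar>y$2\<bar>)"
  have m: "m > 0" using assms unfolding sqo_def m_def by auto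
  define \<tau> where "\<tau> = m / (\<bar>w$1\<bar> + \<bar>w$2\<bar> + 1)"
  have \<tau>: "\<tau> > 0" using m unfolding \<tau>_def by (simp add: add_pos_nonneg)
  have A: "\<tau> * (\<bar>w$1\<bar> + \<bar>w$2\<bar> + 1) = m" unfolding \<tau>_def
    by (simp add: add_pos_nonneg order.strict_implies_not_eq[symmetric])
  have X: "\<tau> * \<bar>w$1\<bar> + \<tau> * (\<bar>w$2\<bar> + 1) = m" "\<tau> * \<bar>w$2\<bar> + \<tau> * (\<bar>w$1\<bar> + 1) = m"
    using A by (simp_all add: algebra_simps)
  have P: "\<tau> * (\<bar>w$2\<bar> + 1) > 0" "\<tau> * (\<bar>w$1\<bar> + 1) > 0" using \<tau> by (simp_all add: add_nonneg_pos)
  have aux: "a + b = mm \<Longrightarrow> b > 0 \<Longrightarrow> a < mm" for a b mm :: real by linarith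
  have b1: "\<tau> * \<bar>w$1\<bar> < m" "\<tau> * \<bar>w$2\<bar> < m" using aux[OF X(1) P(1)] aux[OF X(2) P(2)] by auto
  have mm: "m \<le> s - \<bar>y$1\<bar>" "m \<le> s - \<bar>y$2\<bar>" unfolding m_def by simp_all
  have tw: "\<bar>\<tau> * w$1\<bar> = \<tau> * \<bar>w$1\<bar>" "\<bar>\<tau> * w$2\<bar> = \<tau> * \<bar>w$2\<bar>" using \<tau> by (simp_all add: abs_mult)
  have tri: "\<bar>a + b\<bar> \<le> \<bar>a\<bar> + \<bar>b\<bar>" "\<bar>a - b\<bar> \<le> \<bar>a\<bar> + \<bar>b\<bar>" for a b :: real by arith+
  have "\<bar>y$1 + \<tau> * w$1\<bar> < s" "\<bar>y$1 - \<tau> * w$1\<bar> < s"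
    using tri[of "y$1" "\<tau> * w$1"] tw(1) b1(1) mm(1) by linarith+
  moreover have "\<bar>y$2 + \<tau> * w$2\<bar> < s" "\<bar>y$2 - \<tau> * w$2\<bar> < s"
    using tri[of "y$2" "\<tau> * w$2"] tw(2) b1(2) mm(2) by linarith+
  ultimately show ?thesis using \<tau> unfolding sqo_def by auto
qed

lemma box1:
  fixes x :: real and k m :: int
  assumes e: "e \<in> {1,-1::int}" and x: "of_int k \<le> x" "x \<le> of_int k + 1"
    and y: "of_int k \<le> of_int e * x + 2 * of_int m" "of_int e * x + 2 * of_int m \<le> of_int k + 1"
  shows "of_int e * x + 2 * of_int m = x"
proof (cases "e = 1")
  case True
  then have "of_int (2*m) \<le> (1::real)" "of_int (-1) \<le> (of_int (2*m)::real)" using x y by simp_all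
  then have "2*m \<le> 1" "-1 \<le> 2*m" by (simp_all only: of_int_le_iff of_int_1)
  then have "m = 0" by simp
  then show ?thesis using True by simp
next
  case False
  then have e: "e = -1" using e by simp
  then have "of_int (2*m) \<le> (of_int (2*k+2)::real)" "(of_int (2*k)::real) \<le> of_int (2*m)" using x y by simp_all
  then have "2*m \<le> 2*k+2" "2*k \<le> 2*m" by (simp_all only: of_int_le_iff)
  then have "m = k \<or> m = k + 1" by auto
  then show ?thesis using x y e by auto
qed

lemma PP_box:
  assumes g: "g \<in> PP" and w: "w \<in> sqc (of_int k + 1/2) (of_int l + 1/2) (1/2)"
    and gw: "g w \<in> sqc (of_int k + 1/2) (of_int l + 1/2) (1/2)"
  shows "g w = w"
proof -
  obtain e1 e2 m n where e: "e1 \<in> {1,-1}" "e2 \<in> {1,-1}" "g = pmi e1 e2 m n" using g by (rule PP_E)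
  have "\<bar>x - (h + 1/2)\<bar> \<le> 1/2 \<longleftrightarrow> h \<le> x \<and> x \<le> h + 1" for x h :: real by arith
  then have w': "of_int k \<le> w$1" "w$1 \<le> of_int k + 1" "of_int l \<le> w$2" "w$2 \<le> of_int l + 1"
     and gw': "of_int k \<le> g w$1" "g w$1 \<le> of_int k + 1" "of_int l \<le> g w$2" "g w$2 \<le> of_int l + 1"
    using w gw unfolding sqc_def by auto
  have "of_int e1 * w$1 + 2 * of_int m = w$1" using box1[OF e(1) w'(1,2)] gw'(1,2) e(3) by simp
  moreover have "of_int e2 * w$2 + 2 * of_int n = w$2" using box1[OF e(2) w'(3,4)] gw'(3,4) e(3) by simp
  ultimately show ?thesis using e(3) by (simp add: vec2_eq_iff)
qed

lemma orb_PP_iff: "orb PP z = orb PP z' \<longleftrightarrow> (\<exists>g\<in>PP. z' = g z)"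
proof
  assume "orb PP z = orb PP z'"
  moreover have "z' \<in> orb PP z'" unfolding orb_def using PP_id by (metis id_apply image_eqI)
  ultimately show "\<exists>g\<in>PP. z' = g z" unfolding orb_def by auto
next
  assume "\<exists>g\<in>PP. z' = g z"
  then obtain g where g: "g \<in> PP" "z' = g z" by blast
  obtain g' where g': "g' \<in> PP" "g' \<circ> g = id" using PP_inv_ex[OF g(1)] by blast
  have "orb PP z' \<subseteq> orb PP z" unfolding orb_def g(2) using PP_comp[OF _ g(1)]
    by (auto simp: image_iff) (metis comp_apply)
  moreover have "orb PP z \<subseteq> orb PP z'" unfolding orb_def g(2)
  proof
    fix x assume "x \<in> (\<lambda>h. h z) ` PP"
    then obtain h where h: "h \<in> PP" "x = h z" by blast
    have "x = (h \<circ> g') (g z)" using g'(2) h(2) by (metis comp_apply id_apply)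
    then show "x \<in> (\<lambda>h. h (g z)) ` PP" using PP_comp[OF h(1) g'(1)] by blast
  qed
  ultimately show "orb PP z = orb PP z'" by blast
qed

lemma aff_comp_det: "(p*p' + q*r') * (r*q' + t*t') - (p*q' + q*t') * (r*p' + t*r') = (p*t - q*r) * (p'*t' - q'*r')"
  for p q r t p' q' r' t' :: real by argo

lemma affinv_det: "p*t - q*r \<noteq> 0 \<Longrightarrow>
  affinv p q r t b1 b2 = aff (t/(p*t - q*r)) (-q/(p*t - q*r)) (-r/(p*t - q*r)) (p/(p*t - q*r))
     (-(t*b1 - q*b2)/(p*t - q*r)) (-(p*b2 - r*b1)/(p*t - q*r))
  \<and> (t/(p*t - q*r)) * (p/(p*t - q*r)) - (-q/(p*t - q*r)) * (-r/(p*t - q*r)) \<noteq> 0"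
proof -
  assume d: "p*t - q*r \<noteq> 0"
  have g: "D \<noteq> 0 \<Longrightarrow> D = p*t - q*r \<Longrightarrow> (t/D) * (p/D) - (-q/D) * (-r/D) \<noteq> 0" for D
    by (simp add: field_simps)
  show ?thesis using g[OF d refl] by (simp add: affinv_def Let_def)
qed

lemma aff_comp_ex:
  assumes "p*t - q*r \<noteq> 0" "p'*t' - q'*r' \<noteq> 0"
  shows "\<exists>P Q R T B1 B2. P*T - Q*R \<noteq> 0 \<and> aff p q r t b1 b2 \<circ> aff p' q' r' t' b1' b2' = aff P Q R T B1 B2"
  using assms unfolding aff_comp aff_comp_det[symmetric] by (intro exI conjI) (auto simp: aff_comp_det)

lemma affinv_ex:
  assumes "p*t - q*r \<noteq> 0"
  shows "\<exists>P Q R T B1 B2. P*T - Q*R \<noteq> 0 \<and> affinv p q r t b1 b2 = aff P Q R T B1 B2"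
  using affinv_det[OF assms] by blast

lemma cont_aff_nth:
  "continuous_on UNIV (\<lambda>x::pt. \<bar>aff p q r t b1 b2 x $ 1\<bar>)"
  "continuous_on UNIV (\<lambda>x::pt. \<bar>aff p q r t b1 b2 x $ 2\<bar>)"
proof -
  have c: "continuous_on UNIV (\<lambda>x::pt. x $ i)" for i
    by (simp add: linear_continuous_on bounded_linear_vec_nth)
  show "continuous_on UNIV (\<lambda>x::pt. \<bar>aff p q r t b1 b2 x $ 1\<bar>)"
    by (simp; intro continuous_intros c)
  show "continuous_on UNIV (\<lambda>x::pt. \<bar>aff p q r t b1 b2 x $ 2\<bar>)"
    by (simp only: aff_nth; intro continuous_intros c)
qed

locale setting =
  fixes M :: "emap set" and c u v :: pt and s :: real and \<phi> :: emap
    and a11 a12 a21 a22 a1 a2 :: real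
  assumes sg: "space_group2 M"
    and phi: "\<phi> = aff a11 a12 a21 a22 a1 a2"
    and det: "a11*a22 - a12*a21 \<noteq> 0"
    and Mdef: "M = conj \<phi> ` PP"
    and sq: "quotient_is_square M c u v s"
begin

definition \<phi>' :: emap where "\<phi>' = affinv a11 a12 a21 a22 a1 a2"

lemma phi_bij: "bij \<phi>" unfolding phi using aff_bij[OF det] .
lemma phi'_phi: "\<phi>' \<circ> \<phi> = id" unfolding phi \<phi>'_def using affinv_comp[OF det] by simp
lemma phi_phi': "\<phi> \<circ> \<phi>' = id" unfolding phi \<phi>'_def using affinv_comp[OF det] by simp
lemma phi'_phi_apply[simp]: "\<phi>' (\<phi> x) = x" using phi'_phi by (metis comp_apply id_apply)
lemma phi_phi'_apply[simp]: "\<phi> (\<phi>' x) = x" using phi_phi' by (metis comp_apply id_apply)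
lemma phi_inv: "inv_into UNIV \<phi> = \<phi>'" unfolding phi \<phi>'_def using aff_inv[OF det] .
lemma phi'_aff: "\<exists>P Q R T B1 B2. P*T - Q*R \<noteq> 0 \<and> \<phi>' = aff P Q R T B1 B2"
  unfolding \<phi>'_def using affinv_ex[OF det] .

lemma uv: "norm u = 1" "norm v = 1" "u \<bullet> v = 0" "s > 0"
  using sq unfolding quotient_is_square_def by auto

lemma uv_comp: "u$1 * u$1 + u$2 * u$2 = 1" "v$1 * v$1 + v$2 * v$2 = 1" "u$1 * v$1 + u$2 * v$2 = 0"
proof -
  have "u \<bullet> u = 1" "v \<bullet> v = 1" using uv(1,2) by (simp_all add: norm_eq_1)
  then show "u$1 * u$1 + u$2 * u$2 = 1" "v$1 * v$1 + v$2 * v$2 = 1"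
    by (simp_all add: inner_vec_def sum_2)
  show "u$1 * v$1 + u$2 * v$2 = 0" using uv(3) by (simp add: inner_vec_def sum_2)
qed

definition \<Phi> :: emap where "\<Phi> = aff (u$1) (v$1) (u$2) (v$2) (c$1) (c$2)"

lemma detPhi: "u$1 * v$2 - v$1 * u$2 \<noteq> 0"
proof
  assume h: "u$1 * v$2 - v$1 * u$2 = 0"
  have "(u$1 * v$2 - v$1 * u$2)^2 = (u$1 * u$1 + u$2 * u$2) * (v$1 * v$1 + v$2 * v$2) - (u$1 * v$1 + u$2 * v$2)^2"
    by (simp add: power2_eq_square algebra_simps)
  then show False using h uv_comp by simp
qed

lemma Phi_bij: "bij \<Phi>" unfolding \<Phi>_def using aff_bij[OF detPhi] .
lemma Phi_inj: "\<Phi> x = \<Phi> y \<longleftrightarrow> x = y" using Phi_bij by (meson bij_is_inj inj_eq)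

lemma Phi_apply: "\<Phi> z = c + z$1 *\<^sub>R u + z$2 *\<^sub>R v"
  unfolding \<Phi>_def by (simp add: vec2_eq_iff algebra_simps)

lemma S_eq: "square c u v s = \<Phi> ` sqc 0 0 s"
proof
  show "square c u v s \<subseteq> \<Phi> ` sqc 0 0 s"
  proof
    fix x assume "x \<in> square c u v s"
    then obtain a b where ab: "x = c + a *\<^sub>R u + b *\<^sub>R v" "\<bar>a\<bar> \<le> s" "\<bar>b\<bar> \<le> s"
      unfolding square_def by blast
    have "x = \<Phi> (vector [a, b])" unfolding Phi_apply ab(1) by simp
    moreover have "vector [a, b] \<in> sqc 0 0 s" unfolding sqc_def using ab by simp
    ultimately show "x \<in> \<Phi> ` sqc 0 0 s" by blast
  qed
next
  show "\<Phi> ` sqc 0 0 s \<subseteq> square c u v s"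
    unfolding square_def sqc_def Phi_apply by auto
qed

lemma orbM: "orb M (\<phi> z) = \<phi> ` orb PP z"
proof -
  have "conj \<phi> h (\<phi> z) = \<phi> (h z)" for h
    using conj_eqD[OF phi_bij refl, of h] by (metis comp_apply)
  then show ?thesis unfolding orb_def Mdef by (simp add: image_image)
qed

lemma orbM_iff: "orb M (\<phi> z) = orb M (\<phi> z') \<longleftrightarrow> (\<exists>g\<in>PP. z' = g z)"
  unfolding orbM orb_PP_iff[symmetric] using phi_bij
  by (simp add: bij_is_inj inj_image_eq_iff)

lemma sqo_sqc: "sqo s \<subseteq> sqc 0 0 s" unfolding sqo_def sqc_def by auto

lemma O_interior: "\<Phi> ` sqo s \<subseteq> interior (square c u v s)"
proof (rule interior_maximal)
  show "\<Phi> ` sqo s \<subseteq> square c u v s" unfolding S_eq using sqo_sqc by blast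
  define \<Phi>' where "\<Phi>' = affinv (u$1) (v$1) (u$2) (v$2) (c$1) (c$2)"
  have i1: "\<Phi>' (\<Phi> x) = x" "\<Phi> (\<Phi>' x) = x" for x
    using affinv_comp[OF detPhi] unfolding \<Phi>'_def \<Phi>_def by (metis comp_apply id_apply)+
  obtain P Q R T B1 B2 where \<Phi>': "\<Phi>' = aff P Q R T B1 B2"
    using affinv_ex[OF detPhi] unfolding \<Phi>'_def by blast
  have "\<Phi> ` sqo s = {x. \<bar>\<Phi>' x $ 1\<bar> < s \<and> \<bar>\<Phi>' x $ 2\<bar> < s}"
  proof
    show "\<Phi> ` sqo s \<subseteq> {x. \<bar>\<Phi>' x $ 1\<bar> < s \<and> \<bar>\<Phi>' x $ 2\<bar> < s}" unfolding sqo_def using i1 by auto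
    show "{x. \<bar>\<Phi>' x $ 1\<bar> < s \<and> \<bar>\<Phi>' x $ 2\<bar> < s} \<subseteq> \<Phi> ` sqo s"
    proof
      fix x assume "x \<in> {x. \<bar>\<Phi>' x $ 1\<bar> < s \<and> \<bar>\<Phi>' x $ 2\<bar> < s}"
      then have "\<Phi>' x \<in> sqo s" unfolding sqo_def by simp
      then show "x \<in> \<Phi> ` sqo s" using i1(2)[of x] by (metis image_eqI)
    qed
  qed
  moreover have "open {x. \<bar>\<Phi>' x $ 1\<bar> < s \<and> \<bar>\<Phi>' x $ 2\<bar> < s}"
    unfolding \<Phi>' by (intro open_Collect_conj open_Collect_less cont_aff_nth continuous_on_const)
  ultimately show "open (\<Phi> ` sqo s)" by simp
qed

lemma inj_sqo:
  assumes "y \<in> sqo s" "y' \<in> sqo s" "orb M (\<Phi> y) = orb M (\<Phi> y')"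
  shows "y = y'"
proof -
  have "\<Phi> y \<in> interior (square c u v s)" "\<Phi> y' \<in> interior (square c u v s)"
    using O_interior assms(1,2) by blast+
  then have "\<Phi> y = \<Phi> y'" using sq assms(3) unfolding quotient_is_square_def by blast
  then show ?thesis using Phi_inj by blast
qed

definition \<Theta> :: emap where "\<Theta> = \<phi>' \<circ> \<Phi>"

lemma Theta_aff: "\<exists>P Q R T B1 B2. P*T - Q*R \<noteq> 0 \<and> \<Theta> = aff P Q R T B1 B2"
proof -
  obtain P Q R T B1 B2 where h: "P*T - Q*R \<noteq> 0" "\<phi>' = aff P Q R T B1 B2" using phi'_aff by blast
  show ?thesis unfolding \<Theta>_def \<Phi>_def h(2) by (rule aff_comp_ex[OF h(1) detPhi])
qed

lemma Phi_eq: "\<Phi> = \<phi> \<circ> \<Theta>"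
  unfolding \<Theta>_def using phi_phi' by (simp add: o_assoc)

lemma Phi_eq_apply: "\<Phi> y = \<phi> (\<Theta> y)" using Phi_eq by simp

lemma G2:
  assumes y: "y \<in> sqo s"
  shows "\<Theta> y $ 1 \<notin> \<int>" "\<Theta> y $ 2 \<notin> \<int>"
proof -
  obtain p q r t b1 b2 where \<Theta>: "p*t - q*r \<noteq> 0" "\<Theta> = aff p q r t b1 b2" using Theta_aff by blast
  show "\<Theta> y $ 1 \<notin> \<int>"
  proof
    assume "\<Theta> y $ 1 \<in> \<int>"
    then obtain m where m: "\<Theta> y $ 1 = of_int m" by (metis Ints_cases)
    define w :: pt where "w = vector [t/(p*t - q*r), -r/(p*t - q*r)]"
    obtain \<tau> where \<tau>: "\<tau> > 0" "y + \<tau> *\<^sub>R w \<in> sqo s" "y - \<tau> *\<^sub>R w \<in> sqo s" using small_step[OF y] by blast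
    have e: "\<Theta> (y + \<tau> *\<^sub>R w) = \<Theta> y + vector [\<tau>, 0]" "\<Theta> (y - \<tau> *\<^sub>R w) = \<Theta> y - vector [\<tau>, 0]"
      unfolding w_def \<Theta>(2) using aff_shift1[OF \<Theta>(1)] by blast+
    have "R1 m (\<Theta> (y + \<tau> *\<^sub>R w)) = \<Theta> (y - \<tau> *\<^sub>R w)" unfolding e R1_def using m
      by (simp add: vec2_eq_iff)
    then have "orb M (\<phi> (\<Theta> (y + \<tau> *\<^sub>R w))) = orb M (\<phi> (\<Theta> (y - \<tau> *\<^sub>R w)))"
      using orbM_iff R1_PP by metis
    then have "y + \<tau> *\<^sub>R w = y - \<tau> *\<^sub>R w" using inj_sqo[OF \<tau>(2,3)] by (simp add: Phi_eq_apply)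
    then have "w = 0" using \<tau>(1) by (simp add: vec2_eq_iff)
    then have "t = 0" "r = 0" using \<Theta>(1) unfolding w_def by (simp_all add: vec2_eq_iff)
    then show False using \<Theta>(1) by simp
  qed
  show "\<Theta> y $ 2 \<notin> \<int>"
  proof
    assume "\<Theta> y $ 2 \<in> \<int>"
    then obtain m where m: "\<Theta> y $ 2 = of_int m" by (metis Ints_cases)
    define w :: pt where "w = vector [-q/(p*t - q*r), p/(p*t - q*r)]"
    obtain \<tau> where \<tau>: "\<tau> > 0" "y + \<tau> *\<^sub>R w \<in> sqo s" "y - \<tau> *\<^sub>R w \<in> sqo s" using small_step[OF y] by blast
    have e: "\<Theta> (y + \<tau> *\<^sub>R w) = \<Theta> y + vector [0, \<tau>]" "\<Theta> (y - \<tau> *\<^sub>R w) = \<Theta> y - vector [0, \<tau>]"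
      unfolding w_def \<Theta>(2) using aff_shift2[OF \<Theta>(1)] by blast+
    have "R2 m (\<Theta> (y + \<tau> *\<^sub>R w)) = \<Theta> (y - \<tau> *\<^sub>R w)" unfolding e R2_def using m
      by (simp add: vec2_eq_iff)
    then have "orb M (\<phi> (\<Theta> (y + \<tau> *\<^sub>R w))) = orb M (\<phi> (\<Theta> (y - \<tau> *\<^sub>R w)))"
      using orbM_iff R2_PP by metis
    then have "y + \<tau> *\<^sub>R w = y - \<tau> *\<^sub>R w" using inj_sqo[OF \<tau>(2,3)] by (simp add: Phi_eq_apply)
    then have "w = 0" using \<tau>(1) by (simp add: vec2_eq_iff)
    then have "q = 0" "p = 0" using \<Theta>(1) unfolding w_def by (simp_all add: vec2_eq_iff)
    then show False using \<Theta>(1) by simp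
  qed
qed

end

definition spat :: "int \<Rightarrow> int \<Rightarrow> int \<Rightarrow> int \<Rightarrow> bool" where
  "spat p q r t \<longleftrightarrow> (q = 0 \<and> r = 0 \<and> p \<in> {1,-1} \<and> t \<in> {1,-1}) \<or> (p = 0 \<and> t = 0 \<and> q \<in> {1,-1} \<and> r \<in> {1,-1})"

lemma seg_lemma:
  fixes A B :: real and k :: int
  assumes kB: "of_int k < B" "B < of_int k + 1"
    and nI: "\<And>l. 0 < l \<Longrightarrow> l < 1 \<Longrightarrow> l * A + (1 - l) * B \<notin> \<int>"
  shows "of_int k \<le> A \<and> A \<le> of_int k + 1"
proof (rule ccontr)
  assume "\<not> (of_int k \<le> A \<and> A \<le> of_int k + 1)"
  then consider "A > of_int k + 1" | "A < of_int k" by linarith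
  then show False
  proof cases
    case 1
    define l where "l = (of_int k + 1 - B) / (A - B)"
    have l: "0 < l" "l < 1" unfolding l_def using 1 kB by (simp_all add: field_simps)
    have "l * (A - B) = of_int k + 1 - B" unfolding l_def using 1 kB by simp
    moreover have "l * A + (1 - l) * B = B + l * (A - B)" by (simp add: algebra_simps)
    ultimately have "l * A + (1 - l) * B = of_int (k + 1)" by simp
    then show False using nI[OF l] by (metis Ints_of_int)
  next
    case 2
    define l where "l = (B - of_int k) / (B - A)"
    have l: "0 < l" "l < 1" unfolding l_def using 2 kB by (simp_all add: field_simps)
    have "l * (B - A) = B - of_int k" unfolding l_def using 2 kB by simp
    moreover have "l * A + (1 - l) * B = B - l * (B - A)" by (simp add: algebra_simps)
    ultimately have "l * A + (1 - l) * B = of_int k" by simp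
    then show False using nI[OF l] by (metis Ints_of_int)
  qed
qed

lemma floor_bounds:
  fixes B :: real
  assumes "B \<notin> \<int>"
  shows "of_int \<lfloor>B\<rfloor> < B" "B < of_int \<lfloor>B\<rfloor> + 1"
proof -
  have "of_int \<lfloor>B\<rfloor> \<le> B" by (rule of_int_floor_le)
  moreover have "of_int \<lfloor>B\<rfloor> \<noteq> B" using assms by (metis Ints_of_int)
  ultimately show "of_int \<lfloor>B\<rfloor> < B" by (rule le_neq_trans)
  show "B < of_int \<lfloor>B\<rfloor> + 1" by (rule real_of_int_floor_add_one_gt)
qed

lemma cb_iff: "\<bar>x - (h + 1/2)\<bar> \<le> 1/2 \<longleftrightarrow> h \<le> x \<and> x \<le> h + 1" for x h :: real by arith

context setting
begin

lemma zero_sqo: "0 \<in> sqo s" unfolding sqo_def using uv(4) by simp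

lemma scale_sqo: "y \<in> sqc 0 0 s \<Longrightarrow> 0 < l \<Longrightarrow> l < 1 \<Longrightarrow> l *\<^sub>R y \<in> sqo s"
proof -
  assume y: "y \<in> sqc 0 0 s" and l: "0 < l" "l < 1"
  have "\<bar>l * y$i\<bar> < s" if "\<bar>y$i\<bar> \<le> s" for i
  proof -
    have "\<bar>l * y$i\<bar> = l * \<bar>y$i\<bar>" using l by (simp add: abs_mult)
    also have "\<dots> \<le> l * s" using that l by (simp add: mult_left_mono)
    also have "\<dots> < s" using l uv(4) by simp
    finally show ?thesis .
  qed
  then show ?thesis using y unfolding sqo_def sqc_def by simp
qed

definition kk :: int where "kk = \<lfloor>\<Theta> 0 $ 1\<rfloor>"
definition ll :: int where "ll = \<lfloor>\<Theta> 0 $ 2\<rfloor>"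
definition cb :: "pt set" where "cb = sqc (of_int kk + 1/2) (of_int ll + 1/2) (1/2)"

lemma G4:
  assumes y: "y \<in> sqc 0 0 s"
  shows "\<Theta> y \<in> cb"
proof -
  obtain p q r t b1 b2 where \<Theta>: "p*t - q*r \<noteq> 0" "\<Theta> = aff p q r t b1 b2" using Theta_aff by blast
  have lin: "\<Theta> (l *\<^sub>R y) $ i = l * \<Theta> y $ i + (1 - l) * \<Theta> 0 $ i" for l i
    unfolding \<Theta>(2) aff_lin_comb by simp
  have a: "of_int kk \<le> \<Theta> y $ 1 \<and> \<Theta> y $ 1 \<le> of_int kk + 1"
  proof (rule seg_lemma)
    show "of_int kk < \<Theta> 0 $ 1" "\<Theta> 0 $ 1 < of_int kk + 1" unfolding kk_def using floor_bounds G2(1)[OF zero_sqo] by blast+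
    show "l * \<Theta> y $ 1 + (1 - l) * \<Theta> 0 $ 1 \<notin> \<int>" if "0 < l" "l < 1" for l
      using G2(1)[OF scale_sqo[OF y that]] lin by simp
  qed
  have b: "of_int ll \<le> \<Theta> y $ 2 \<and> \<Theta> y $ 2 \<le> of_int ll + 1"
  proof (rule seg_lemma)
    show "of_int ll < \<Theta> 0 $ 2" "\<Theta> 0 $ 2 < of_int ll + 1" unfolding ll_def using floor_bounds G2(2)[OF zero_sqo] by blast+
    show "l * \<Theta> y $ 2 + (1 - l) * \<Theta> 0 $ 2 \<notin> \<int>" if "0 < l" "l < 1" for l
      using G2(2)[OF scale_sqo[OF y that]] lin by simp
  qed
  show ?thesis unfolding cb_def sqc_def cb_iff using a b by simp
qed

lemma G5: "\<Theta> ` sqc 0 0 s = cb"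
proof
  show "\<Theta> ` sqc 0 0 s \<subseteq> cb" using G4 by blast
  show "cb \<subseteq> \<Theta> ` sqc 0 0 s"
  proof
    fix w assume w: "w \<in> cb"
    have "orb M (\<phi> w) \<in> orb M ` square c u v s" using sq unfolding quotient_is_square_def OrbSp_def by blast
    then obtain x where x: "x \<in> square c u v s" "orb M x = orb M (\<phi> w)" by blast
    then obtain y where y: "y \<in> sqc 0 0 s" "x = \<Phi> y" unfolding S_eq by blast
    have "orb M (\<phi> w) = orb M (\<phi> (\<Theta> y))" using x(2) y(2) Phi_eq_apply by simp
    then obtain g where g: "g \<in> PP" "\<Theta> y = g w" using orbM_iff by blast
    have "g w = w" using PP_box[OF g(1)] w G4[OF y(1)] g(2) unfolding cb_def by simp
    then show "w \<in> \<Theta> ` sqc 0 0 s" using g(2) y(1) by (metis image_eqI)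
  qed
qed

definition \<kappa> :: real where "\<kappa> = 1 / (2 * s)"

lemma kappa_pos: "\<kappa> > 0" unfolding \<kappa>_def using uv(4) by simp

lemma Theta_form:
  "\<exists>E11 E12 E21 E22. spat E11 E12 E21 E22 \<and>
     \<Theta> = aff (\<kappa> * of_int E11) (\<kappa> * of_int E12) (\<kappa> * of_int E21) (\<kappa> * of_int E22)
           (of_int kk + 1/2) (of_int ll + 1/2)"
proof -
  obtain p q r t b1 b2 where \<Theta>: "p*t - q*r \<noteq> 0" "\<Theta> = aff p q r t b1 b2" using Theta_aff by blast
  have img: "aff p q r t b1 b2 ` sqc 0 0 s = sqc (of_int kk + 1/2) (of_int ll + 1/2) (1/2)"
    using G5 \<Theta>(2) cb_def by simp
  have half: "(1/2) / s = \<kappa>" unfolding \<kappa>_def by simp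
  from corner_lemma[OF \<Theta>(1) uv(4) _ img] half
  have C: "aff p q r t b1 b2 (vector [0, 0]) = vector [of_int kk + 1/2, of_int ll + 1/2]"
    "(q = 0 \<and> r = 0 \<and> \<bar>p\<bar> = \<kappa> \<and> \<bar>t\<bar> = \<kappa>) \<or> (p = 0 \<and> t = 0 \<and> \<bar>q\<bar> = \<kappa> \<and> \<bar>r\<bar> = \<kappa>)"
    by simp_all
  have b: "b1 = of_int kk + 1/2" "b2 = of_int ll + 1/2" using C(1) by (simp_all add: vec2_eq_iff)
  define sg :: "real \<Rightarrow> int" where "sg x = (if x > 0 then 1 else -1)" for x
  have sgI: "\<bar>x\<bar> = \<kappa> \<Longrightarrow> x = \<kappa> * of_int (sg x) \<and> sg x \<in> {1,-1}" for x
    using kappa_pos unfolding sg_def by (auto simp: abs_if split: if_splits)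
  from C(2) show ?thesis
  proof
    assume h: "q = 0 \<and> r = 0 \<and> \<bar>p\<bar> = \<kappa> \<and> \<bar>t\<bar> = \<kappa>"
    have "spat (sg p) 0 0 (sg t)" unfolding spat_def using sgI h by blast
    moreover have "\<Theta> = aff (\<kappa> * of_int (sg p)) (\<kappa> * of_int 0) (\<kappa> * of_int 0) (\<kappa> * of_int (sg t))
           (of_int kk + 1/2) (of_int ll + 1/2)" unfolding \<Theta>(2) b using h sgI by (metis mult_zero_right of_int_0)
    ultimately show ?thesis by blast
  next
    assume h: "p = 0 \<and> t = 0 \<and> \<bar>q\<bar> = \<kappa> \<and> \<bar>r\<bar> = \<kappa>"
    have "spat 0 (sg q) (sg r) 0" unfolding spat_def using sgI h by blast
    moreover have "\<Theta> = aff (\<kappa> * of_int 0) (\<kappa> * of_int (sg q)) (\<kappa> * of_int (sg r)) (\<kappa> * of_int 0)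
           (of_int kk + 1/2) (of_int ll + 1/2)" unfolding \<Theta>(2) b using h sgI by (metis mult_zero_right of_int_0)
    ultimately show ?thesis by blast
  qed
qed

end

lemma affine_auto_bij: "affine_auto f \<Longrightarrow> bij f"
  unfolding affine_auto_aff using aff_bij by blast

lemma affine_auto_comp: assumes "affine_auto f" "affine_auto g" shows "affine_auto (f \<circ> g)"
proof -
  obtain p q r t b1 b2 where f: "p*t - q*r \<noteq> 0" "f = aff p q r t b1 b2" using assms(1) unfolding affine_auto_aff by blast
  obtain p' q' r' t' b1' b2' where g: "p'*t' - q'*r' \<noteq> 0" "g = aff p' q' r' t' b1' b2'" using assms(2) unfolding affine_auto_aff by blast
  show ?thesis unfolding affine_auto_aff f(2) g(2) by (rule aff_comp_ex[OF f(1) g(1)])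
qed

lemma conj_img: "bij f1 \<Longrightarrow> bij f2 \<Longrightarrow> conj (f1 \<circ> f2) ` Y = conj f1 ` (conj f2 ` Y)"
  using conj_conj by (simp add: image_image)

context setting
begin

lemma phi_affine: "affine_auto \<phi>" unfolding phi affine_auto_aff using det by blast
lemma phi'_affine: "affine_auto \<phi>'" unfolding affine_auto_aff using phi'_aff by blast
lemma phi'_bij: "bij \<phi>'" using affine_auto_bij phi'_affine by blast

lemma conj_phi'_phi: "conj \<phi>' (conj \<phi> g) = g"
  using conj_conj[OF phi'_bij phi_bij] phi'_phi by simp

lemma conj_phi_phi': "conj \<phi> (conj \<phi>' g) = g"
  using conj_conj[OF phi_bij phi'_bij] phi_phi' by simp

lemma conj_phi_eq: "conj \<phi> g = \<phi> \<circ> g \<circ> \<phi>'" unfolding conj_def phi_inv ..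

lemma NA_to_M: assumes "\<psi> \<in> NA PP" shows "\<phi> \<circ> \<psi> \<circ> \<phi>' \<in> NA M"
proof -
  have a: "affine_auto \<psi>" using assms unfolding NA_def by blast
  have b: "bij \<psi>" using affine_auto_bij[OF a] .
  have bb: "bij (\<phi> \<circ> \<psi>)" using bij_comp[OF b phi_bij] .
  have "conj (\<phi> \<circ> \<psi> \<circ> \<phi>') ` M = conj \<phi> ` conj \<psi> ` conj \<phi>' ` conj \<phi> ` PP"
    unfolding Mdef conj_img[OF bb phi'_bij] conj_img[OF phi_bij b] ..
  also have "\<dots> = conj \<phi> ` conj \<psi> ` PP" unfolding image_image conj_phi'_phi by simp
  also have "\<dots> = M" using assms unfolding NA_def Mdef by simp
  finally have "conj (\<phi> \<circ> \<psi> \<circ> \<phi>') ` M = M" .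
  moreover have "affine_auto (\<phi> \<circ> \<psi> \<circ> \<phi>')" by (intro affine_auto_comp phi_affine phi'_affine a)
  ultimately show ?thesis unfolding NA_def by blast
qed

lemma NA_from_M: assumes "\<alpha> \<in> NA M" shows "\<phi>' \<circ> \<alpha> \<circ> \<phi> \<in> NA PP"
proof -
  have a: "affine_auto \<alpha>" using assms unfolding NA_def by blast
  have b: "bij \<alpha>" using affine_auto_bij[OF a] .
  have bb: "bij (\<phi>' \<circ> \<alpha>)" using bij_comp[OF b phi'_bij] .
  have "conj (\<phi>' \<circ> \<alpha> \<circ> \<phi>) ` PP = conj \<phi>' ` conj \<alpha> ` conj \<phi> ` PP"
    unfolding conj_img[OF bb phi_bij] conj_img[OF phi'_bij b] ..
  also have "\<dots> = conj \<phi>' ` conj \<alpha> ` M" unfolding Mdef ..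
  also have "\<dots> = conj \<phi>' ` M" using assms unfolding NA_def by simp
  also have "\<dots> = PP" unfolding Mdef image_image conj_phi'_phi by simp
  finally have "conj (\<phi>' \<circ> \<alpha> \<circ> \<phi>) ` PP = PP" .
  moreover have "affine_auto (\<phi>' \<circ> \<alpha> \<circ> \<phi>)" by (intro affine_auto_comp phi_affine phi'_affine a)
  ultimately show ?thesis unfolding NA_def by blast
qed

lemma conj_phi_id: "conj \<phi> id = id" by (rule conj_eqI[OF phi_bij]) simp

lemma M_id: "id \<in> M" unfolding Mdef using PP_id conj_phi_id by (metis image_eqI)

lemma M_comp: assumes "g \<in> M" "h \<in> M" shows "g \<circ> h \<in> M"
proof -
  obtain p where p: "p \<in> PP" "g = conj \<phi> p" using assms(1) Mdef by blast
  obtain p' where p': "p' \<in> PP" "h = conj \<phi> p'" using assms(2) Mdef by blast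
  have "g \<circ> h = conj \<phi> (p \<circ> p')" unfolding p(2) p'(2) conj_comp[OF phi_bij] ..
  then show ?thesis unfolding Mdef using PP_comp[OF p(1) p'(1)] by blast
qed

lemma M_inv: assumes "g \<in> M" shows "\<exists>g'\<in>M. g \<circ> g' = id \<and> g' \<circ> g = id"
proof -
  obtain p where p: "p \<in> PP" "g = conj \<phi> p" using assms Mdef by blast
  obtain p' where p': "p' \<in> PP" "p \<circ> p' = id" "p' \<circ> p = id" using PP_inv_ex[OF p(1)] by blast
  have "g \<circ> conj \<phi> p' = id" "conj \<phi> p' \<circ> g = id"
    using conj_comp[OF phi_bij, of p p'] conj_comp[OF phi_bij, of p' p] p p' conj_phi_id by simp_all
  then show ?thesis using p'(1) Mdef by blast
qed

lemma M_bij: assumes "g \<in> M" shows "bij g"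
proof -
  obtain g' where "g \<circ> g' = id" "g' \<circ> g = id" using M_inv[OF assms] by blast
  then show ?thesis using o_bij[of g' g] by blast
qed

lemma M_affine: assumes "g \<in> M" shows "affine_auto g"
proof -
  obtain p where p: "p \<in> PP" "g = conj \<phi> p" using assms Mdef by blast
  show ?thesis unfolding p(2) conj_phi_eq by (intro affine_auto_comp phi_affine phi'_affine PP_affine p(1))
qed

lemma M_NA: assumes "g \<in> M" shows "g \<in> NA M"
proof -
  obtain p where p: "p \<in> PP" "g = conj \<phi> p" using assms Mdef by blast
  have "p \<in> NA PP" using p(1) unfolding NA_def
  proof (intro CollectI conjI)
    show "affine_auto p" using PP_affine p(1) .
    show "conj p ` PP = PP"
    proof
      obtain p' where p': "p' \<in> PP" "p \<circ> p' = id" "p' \<circ> p = id" using PP_inv_ex[OF p(1)] by blast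
      have ip: "inv_into UNIV p = p'" using p' inv_unique_comp by blast
      show "conj p ` PP \<subseteq> PP" unfolding conj_def ip using PP_comp p(1) p'(1) by blast
      show "PP \<subseteq> conj p ` PP"
      proof
        fix h assume h: "h \<in> PP"
        obtain p' where p': "p' \<in> PP" "p \<circ> p' = id" "p' \<circ> p = id" using PP_inv_ex[OF p(1)] by blast
        have ip: "inv_into UNIV p = p'" using p' inv_unique_comp by blast
        have "p \<circ> (p' \<circ> h \<circ> p) \<circ> p' = (p \<circ> p') \<circ> h \<circ> (p \<circ> p')" by (simp only: o_assoc)
        then have "conj p (p' \<circ> h \<circ> p) = h" unfolding conj_def ip using p' by simp
        moreover have "p' \<circ> h \<circ> p \<in> PP" using PP_comp p'(1) h p(1) by blast
        ultimately show "h \<in> conj p ` PP" by (metis image_eqI)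
      qed
    qed
  qed
  then have "\<phi> \<circ> p \<circ> \<phi>' \<in> NA M" by (rule NA_to_M)
  then show ?thesis using p(2) conj_phi_eq by simp
qed

lemma orb_self: "x \<in> orb M x" unfolding orb_def using M_id by (metis id_apply image_eqI)

lemma orb_g: assumes "g \<in> M" shows "orb M (g x) = orb M x"
proof
  show "orb M (g x) \<subseteq> orb M x" unfolding orb_def using M_comp[OF _ assms] by (auto, metis comp_apply image_eqI)
  obtain g' where g': "g' \<in> M" "g' \<circ> g = id" using M_inv[OF assms] by blast
  show "orb M x \<subseteq> orb M (g x)" unfolding orb_def
  proof
    fix y assume "y \<in> (\<lambda>h. h x) ` M"
    then obtain h where h: "h \<in> M" "y = h x" by blast
    have "y = (h \<circ> g') (g x)" using g'(2) h(2) by (metis comp_apply id_apply)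
    then show "y \<in> (\<lambda>h. h (g x)) ` M" using M_comp[OF h(1) g'(1)] by blast
  qed
qed

lemma orb_mem: "y \<in> orb M x \<Longrightarrow> orb M y = orb M x"
  unfolding orb_def using orb_g[unfolded orb_def] by blast

lemma orb_NA: assumes "\<alpha> \<in> NA M" shows "orb M (\<alpha> x) = \<alpha> ` orb M x"
proof -
  have b: "bij \<alpha>" using assms affine_auto_bij unfolding NA_def by blast
  have e: "conj \<alpha> h (\<alpha> x) = \<alpha> (h x)" for h using conj_eqD[OF b refl, of h] by (metis comp_apply)
  have "orb M (\<alpha> x) = (\<lambda>g. g (\<alpha> x)) ` conj \<alpha> ` M" using assms unfolding NA_def orb_def by simp
  also have "\<dots> = \<alpha> ` orb M x" unfolding orb_def image_image e ..
  finally show ?thesis .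
qed

lemma indaff_orb: assumes "\<alpha> \<in> NA M" shows "indaff M \<alpha> (orb M x) = orb M (\<alpha> x)"
proof -
  have "orb M x \<in> OrbSp M" unfolding OrbSp_def by blast
  then have "indaff M \<alpha> (orb M x) = orb M (\<alpha> (SOME y. y \<in> orb M x))" unfolding indaff_def by simp
  moreover have "(SOME y. y \<in> orb M x) \<in> orb M x" using orb_self by (metis someI)
  then obtain g where "g \<in> M" "(SOME y. y \<in> orb M x) = g x" unfolding orb_def by blast
  moreover have "orb M (\<alpha> (g x)) = orb M (\<alpha> x)" if "g \<in> M" for g
  proof -
    have "\<alpha> (g x) \<in> orb M (\<alpha> x)" unfolding orb_NA[OF assms] using that unfolding orb_def by blast
    then show ?thesis by (rule orb_mem)
  qed
  ultimately show ?thesis by simp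
qed

end

definition sgm :: emap where "sgm = aff (-1) 0 0 1 0 0"

definition D4 :: "emap set" where
  "D4 = {aff (of_int a) (of_int b) (of_int c) (of_int d) 0 0 | a b c d. spat a b c d}"

lemma D4_words: "D4 = {id, sgm, swp, sgm \<circ> swp, swp \<circ> sgm, sgm \<circ> swp \<circ> sgm, swp \<circ> sgm \<circ> swp, sgm \<circ> swp \<circ> sgm \<circ> swp}"
proof -
  have w: "sgm \<circ> swp = aff 0 (-1) 1 0 0 0" "swp \<circ> sgm = aff 0 1 (-1) 0 0 0"
    "sgm \<circ> swp \<circ> sgm = aff 0 (-1) (-1) 0 0 0" "swp \<circ> sgm \<circ> swp = aff 1 0 0 (-1) 0 0"
    "sgm \<circ> swp \<circ> sgm \<circ> swp = aff (-1) 0 0 (-1) 0 0"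
    unfolding sgm_def swp_def aff_comp by simp_all
  have D: "D4 = {aff 1 0 0 1 0 0, aff (-1) 0 0 1 0 0, aff 0 1 1 0 0 0, aff 0 (-1) 1 0 0 0, aff 0 1 (-1) 0 0 0,
     aff 0 (-1) (-1) 0 0 0, aff 1 0 0 (-1) 0 0, aff (-1) 0 0 (-1) 0 0}"
  proof
    show "D4 \<subseteq> {aff 1 0 0 1 0 0, aff (-1) 0 0 1 0 0, aff 0 1 1 0 0 0, aff 0 (-1) 1 0 0 0, aff 0 1 (-1) 0 0 0,
     aff 0 (-1) (-1) 0 0 0, aff 1 0 0 (-1) 0 0, aff (-1) 0 0 (-1) 0 0}"
    proof
      fix x assume "x \<in> D4"
      then obtain a b c d where x: "x = aff (of_int a) (of_int b) (of_int c) (of_int d) 0 0" "spat a b c d"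
        unfolding D4_def by blast
      from x(2) consider "b = 0" "c = 0" "a = 1 \<or> a = -1" "d = 1 \<or> d = -1"
        | "a = 0" "d = 0" "b = 1 \<or> b = -1" "c = 1 \<or> c = -1" unfolding spat_def by auto
      then show "x \<in> {aff 1 0 0 1 0 0, aff (-1) 0 0 1 0 0, aff 0 1 1 0 0 0, aff 0 (-1) 1 0 0 0, aff 0 1 (-1) 0 0 0,
         aff 0 (-1) (-1) 0 0 0, aff 1 0 0 (-1) 0 0, aff (-1) 0 0 (-1) 0 0}"
        by cases (auto simp: x(1))
    qed
    show "{aff 1 0 0 1 0 0, aff (-1) 0 0 1 0 0, aff 0 1 1 0 0 0, aff 0 (-1) 1 0 0 0, aff 0 1 (-1) 0 0 0,
     aff 0 (-1) (-1) 0 0 0, aff 1 0 0 (-1) 0 0, aff (-1) 0 0 (-1) 0 0} \<subseteq> D4"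
    proof -
      have e: "aff (of_int a) (of_int b) (of_int c) (of_int d) 0 0 \<in> D4" if "spat a b c d" for a b c d
        unfolding D4_def using that by blast
      show ?thesis using e[of 1 0 0 1] e[of "-1" 0 0 1] e[of 0 1 1 0] e[of 0 "-1" 1 0] e[of 0 1 "-1" 0]
          e[of 0 "-1" "-1" 0] e[of 1 0 0 "-1"] e[of "-1" 0 0 "-1"]
        unfolding spat_def by simp
    qed
  qed
  show ?thesis unfolding D by (simp add: sgm_def swp_def aff_comp aff_id[symmetric])
qed

lemma card_D4: "card D4 = 8"
  unfolding D4_words
  by (simp add: sgm_def swp_def aff_comp aff_id[symmetric] aff_eq_iff)

lemma spat_mult:
  assumes "spat a11 a12 a21 a22" "spat b11 b12 b21 b22"
  shows "spat (a11*b11 + a12*b21) (a11*b12 + a12*b22) (a21*b11 + a22*b21) (a21*b12 + a22*b22)"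
proof -
  from assms(1) consider "a12 = 0" "a21 = 0" "a11 \<in> {1,-1}" "a22 \<in> {1,-1}"
    | "a11 = 0" "a22 = 0" "a12 \<in> {1,-1}" "a21 \<in> {1,-1}" unfolding spat_def by blast
  then show ?thesis
  proof cases
    case 1
    from assms(2) consider "b12 = 0" "b21 = 0" "b11 \<in> {1,-1}" "b22 \<in> {1,-1}"
      | "b11 = 0" "b22 = 0" "b12 \<in> {1,-1}" "b21 \<in> {1,-1}" unfolding spat_def by blast
    then show ?thesis by cases (use 1 in \<open>auto simp: spat_def\<close>)
  next
    case 2
    from assms(2) consider "b12 = 0" "b21 = 0" "b11 \<in> {1,-1}" "b22 \<in> {1,-1}"
      | "b11 = 0" "b22 = 0" "b12 \<in> {1,-1}" "b21 \<in> {1,-1}" unfolding spat_def by blast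
    then show ?thesis by cases (use 2 in \<open>auto simp: spat_def\<close>)
  qed
qed

lemma spat_transp: "spat a b c d \<Longrightarrow> spat a c b d" unfolding spat_def by blast

lemma spat_orth:
  assumes "spat x1 x2 x3 x4"
  shows "x1 * x1 + x3 * x3 = 1" "x2 * x2 + x4 * x4 = 1" "x1 * x2 + x3 * x4 = 0"
    "x1 * x1 + x2 * x2 = 1" "x3 * x3 + x4 * x4 = 1" "x1 * x3 + x2 * x4 = 0"
  using assms unfolding spat_def by (auto simp: pm1_sq)

lemma D4_sqo: assumes "G \<in> D4" "y \<in> sqo s" shows "G y \<in> sqo s"
  using assms unfolding D4_def spat_def sqo_def by (auto simp: abs_minus_commute)

lemma npred_comp:
  assumes "npred f" "npred g" shows "npred (f \<circ> g)"
proof -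
  obtain p q r t b1 b2 :: int where f:
    "spat p q r t" "f = aff (of_int p) (of_int q) (of_int r) (of_int t) (of_int b1) (of_int b2)"
    using assms(1) unfolding npred_def spat_def by blast
  obtain p' q' r' t' b1' b2' :: int where g:
    "spat p' q' r' t'" "g = aff (of_int p') (of_int q') (of_int r') (of_int t') (of_int b1') (of_int b2')"
    using assms(2) unfolding npred_def spat_def by blast
  have "f \<circ> g = aff (of_int (p*p' + q*r')) (of_int (p*q' + q*t')) (of_int (r*p' + t*r')) (of_int (r*q' + t*t'))
      (of_int (p*b1' + q*b2' + b1)) (of_int (r*b1' + t*b2' + b2))"
    unfolding f(2) g(2) aff_comp by simp
  moreover have "spat (p*p' + q*r') (p*q' + q*t') (r*p' + t*r') (r*q' + t*t')" using spat_mult f(1) g(1) .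
  ultimately show ?thesis unfolding npred_def spat_def by blast
qed

lemma fixpar: "\<exists>f m. f \<in> {1,-1::int} \<and> of_int f * (of_int j + 1/2) + 2 * of_int m = of_int k + (1/2::real)"
proof (cases "even (k - j)")
  case True
  then obtain m where m: "k - j = 2 * m" by (metis evenE)
  have "of_int 1 * (of_int j + 1/2) + 2 * of_int m = of_int k + (1/2::real)"
  proof -
    have "(2::real) * of_int m = of_int k - of_int j" using m by (metis of_int_diff of_int_mult of_int_numeral)
    then show ?thesis by simp
  qed
  then show ?thesis by blast
next
  case False
  then have "even (k + j + 1)" by presburger
  then obtain m where m: "k + j + 1 = 2 * m" by (metis evenE)
  have "of_int (-1) * (of_int j + 1/2) + 2 * of_int m = of_int k + (1/2::real)"
  proof -
    have "(2::real) * of_int m = of_int k + of_int j + 1" using m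
      by (metis of_int_add of_int_mult of_int_numeral of_int_1)
    then show ?thesis by simp
  qed
  then show ?thesis by blast
qed

context setting
begin

lemma inner_uv: "u \<bullet> u = 1" "v \<bullet> v = 1" "u \<bullet> v = 0" "v \<bullet> u = 0"
  using uv by (simp_all add: norm_eq_1 inner_commute)

lemma mref_eq: "refl_line c v = conj \<Phi> sgm"
proof (rule conj_eqI[OF Phi_bij, symmetric], rule ext)
  fix z
  have "(\<Phi> z - c) \<bullet> v = z$2" unfolding Phi_apply by (simp add: inner_add_left inner_uv)
  then have "refl_line c v (\<Phi> z) = c + (2 * z$2) *\<^sub>R v - (z$1 *\<^sub>R u + z$2 *\<^sub>R v)"
    unfolding refl_line_def by (simp add: Phi_apply)
  moreover have "\<Phi> (sgm z) = c + (- z$1) *\<^sub>R u + z$2 *\<^sub>R v" unfolding Phi_apply sgm_def by simp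
  ultimately show "(\<Phi> \<circ> sgm) z = (refl_line c v \<circ> \<Phi>) z" by (simp add: vec2_eq_iff algebra_simps)
qed

lemma dref_eq: "refl_line c ((1 / sqrt 2) *\<^sub>R (u + v)) = conj \<Phi> swp"
proof (rule conj_eqI[OF Phi_bij, symmetric], rule ext)
  fix z
  let ?w = "(1 / sqrt 2) *\<^sub>R (u + v)"
  have "(\<Phi> z - c) \<bullet> ?w = (z$1 + z$2) / sqrt 2" unfolding Phi_apply
    by (simp add: inner_add_left inner_add_right inner_uv algebra_simps add_divide_distrib)
  moreover have s2: "sqrt 2 * sqrt 2 = (2::real)" by simp
  have sc: "(2 * ((z$1 + z$2) / sqrt 2)) * (1 / sqrt 2) = z$1 + z$2"
  proof -
    have "(2 * ((z$1 + z$2) / sqrt 2)) * (1 / sqrt 2) = 2 * (z$1 + z$2) / (sqrt 2 * sqrt 2)" by simp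
    also have "\<dots> = z$1 + z$2" unfolding s2 by simp
    finally show ?thesis .
  qed
  have "(2 * ((z$1 + z$2) / sqrt 2)) *\<^sub>R ?w = (z$1 + z$2) *\<^sub>R (u + v)"
    by (simp only: scaleR_scaleR sc)
  ultimately have "refl_line c ?w (\<Phi> z) = c + (z$1 + z$2) *\<^sub>R (u + v) - (z$1 *\<^sub>R u + z$2 *\<^sub>R v)"
    unfolding refl_line_def by (simp add: Phi_apply)
  moreover have "\<Phi> (swp z) = c + z$2 *\<^sub>R u + z$1 *\<^sub>R v" unfolding Phi_apply swp_def by simp
  ultimately show "(\<Phi> \<circ> swp) z = (refl_line c ?w \<circ> \<Phi>) z" by (simp add: vec2_eq_iff algebra_simps)
qed

lemma Theta_bij: "bij \<Theta>" unfolding \<Theta>_def using bij_comp[OF Phi_bij phi'_bij] .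

lemma conj_Phi: "conj \<Phi> G = conj \<phi> (conj \<Theta> G)"
  using conj_conj[OF phi_bij Theta_bij] Phi_eq by simp

lemma Theta_form': obtains e1 e2 where "e1 \<in> {1,-1}" "e2 \<in> {1,-1}"
   "\<Theta> = aff (\<kappa> * of_int e1) 0 0 (\<kappa> * of_int e2) (of_int kk + 1/2) (of_int ll + 1/2) \<or>
    \<Theta> = aff 0 (\<kappa> * of_int e1) (\<kappa> * of_int e2) 0 (of_int kk + 1/2) (of_int ll + 1/2)"
  using Theta_form unfolding spat_def by (metis mult_zero_right of_int_0)

lemma conjTheta_sgm: "npred (conj \<Theta> sgm)"
proof -
  obtain e1 e2 where e: "e1 \<in> {1,-1}" "e2 \<in> {1,-1}"
   "\<Theta> = aff (\<kappa> * of_int e1) 0 0 (\<kappa> * of_int e2) (of_int kk + 1/2) (of_int ll + 1/2) \<or>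
    \<Theta> = aff 0 (\<kappa> * of_int e1) (\<kappa> * of_int e2) 0 (of_int kk + 1/2) (of_int ll + 1/2)" by (rule Theta_form')
  from e(3) show ?thesis
  proof
    assume T: "\<Theta> = aff (\<kappa> * of_int e1) 0 0 (\<kappa> * of_int e2) (of_int kk + 1/2) (of_int ll + 1/2)"
    define Xm where "Xm = aff (of_int (-1)) (of_int 0) (of_int 0) (of_int 1) (of_int (2*kk+1)) (of_int 0)"
    have "\<Theta> \<circ> sgm = Xm \<circ> \<Theta>" unfolding T Xm_def sgm_def aff_comp aff_eq_iff by simp
    then have "conj \<Theta> sgm = Xm" by (rule conj_eqI[OF Theta_bij])
    moreover have "npred Xm" unfolding Xm_def npred_def by blast
    ultimately show ?thesis by simp
  next
    assume T: "\<Theta> = aff 0 (\<kappa> * of_int e1) (\<kappa> * of_int e2) 0 (of_int kk + 1/2) (of_int ll + 1/2)"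
    define Xm where "Xm = aff (of_int 1) (of_int 0) (of_int 0) (of_int (-1)) (of_int 0) (of_int (2*ll+1))"
    have "\<Theta> \<circ> sgm = Xm \<circ> \<Theta>" unfolding T Xm_def sgm_def aff_comp aff_eq_iff by simp
    then have "conj \<Theta> sgm = Xm" by (rule conj_eqI[OF Theta_bij])
    moreover have "npred Xm" unfolding Xm_def npred_def by blast
    ultimately show ?thesis by simp
  qed
qed

lemma conjTheta_swp: "npred (conj \<Theta> swp)"
proof -
  obtain e1 e2 where e: "e1 \<in> {1,-1}" "e2 \<in> {1,-1}"
   "\<Theta> = aff (\<kappa> * of_int e1) 0 0 (\<kappa> * of_int e2) (of_int kk + 1/2) (of_int ll + 1/2) \<or>
    \<Theta> = aff 0 (\<kappa> * of_int e1) (\<kappa> * of_int e2) 0 (of_int kk + 1/2) (of_int ll + 1/2)" by (rule Theta_form')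
  define e where "e = e1 * e2"
  define b1 where "b1 = (if e = 1 then kk - ll else kk + ll + 1)"
  define b2 where "b2 = (if e = 1 then ll - kk else kk + ll + 1)"
  define Xm where "Xm = aff (of_int 0) (of_int e) (of_int e) (of_int 0) (of_int b1) (of_int b2)"
  have "e \<in> {1,-1}" unfolding e_def using pm1_mult e(1,2) by blast
  then have "npred Xm" unfolding Xm_def npred_def
    by (intro exI[of _ 0] exI[of _ e] exI[of _ e] exI[of _ 0] exI[of _ b1] exI[of _ b2]) simp
  moreover have "\<Theta> \<circ> swp = Xm \<circ> \<Theta>"
  proof -
    have q: "e1 = 1 \<or> e1 = -1" "e2 = 1 \<or> e2 = -1" using e(1,2) by auto
    from e(3) show ?thesis
    proof
      assume T: "\<Theta> = aff (\<kappa> * of_int e1) 0 0 (\<kappa> * of_int e2) (of_int kk + 1/2) (of_int ll + 1/2)"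
      show ?thesis unfolding T Xm_def swp_def aff_comp aff_eq_iff b1_def b2_def e_def
        using q by (elim disjE) (simp_all add: algebra_simps)
    next
      assume T: "\<Theta> = aff 0 (\<kappa> * of_int e1) (\<kappa> * of_int e2) 0 (of_int kk + 1/2) (of_int ll + 1/2)"
      show ?thesis unfolding T Xm_def swp_def aff_comp aff_eq_iff b1_def b2_def e_def
        using q by (elim disjE) (simp_all add: algebra_simps)
    qed
  qed
  then have "conj \<Theta> swp = Xm" by (rule conj_eqI[OF Theta_bij])
  ultimately show ?thesis by simp
qed

lemma NA_via_Theta: assumes "npred (conj \<Theta> G)" shows "conj \<Phi> G \<in> NA M"
  unfolding conj_Phi conj_phi_eq using NA_to_M npred_NA[OF assms] by blast

lemma mref_NA: "refl_line c v \<in> NA M"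
  unfolding mref_eq using NA_via_Theta conjTheta_sgm by blast

lemma dref_NA: "refl_line c ((1 / sqrt 2) *\<^sub>R (u + v)) \<in> NA M"
  unfolding dref_eq using NA_via_Theta conjTheta_swp by blast

end

lemma halfint:
  assumes "(a = 1 \<or> a = -1) \<and> b = 0 \<or> a = 0 \<and> (b = 1 \<or> b = -1)"
  shows "\<exists>j::int. of_int a * (of_int k + 1/2) + of_int b * (of_int l + 1/2) + of_int cc = of_int j + (1/2::real)"
proof -
  from assms consider "a = 1" "b = 0" | "a = -1" "b = 0" | "a = 0" "b = 1" | "a = 0" "b = -1" by blast
  then show ?thesis
  proof cases
    case 1 then show ?thesis by (intro exI[of _ "k + cc"]) simp
  next
    case 2 then show ?thesis by (intro exI[of _ "cc - k - 1"]) simp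
  next
    case 3 then show ?thesis by (intro exI[of _ "l + cc"]) simp
  next
    case 4 then show ?thesis by (intro exI[of _ "cc - l - 1"]) simp
  qed
qed

context setting
begin

lemma Theta_conj_D4:
  assumes Q: "spat Q11 Q12 Q21 Q22"
    and c1: "of_int Q11 * (of_int kk + 1/2) + of_int Q12 * (of_int ll + 1/2) + c1 = of_int kk + 1/2"
    and c2: "of_int Q21 * (of_int kk + 1/2) + of_int Q22 * (of_int ll + 1/2) + c2 = of_int ll + 1/2"
  shows "\<exists>G\<in>D4. \<Theta> \<circ> G = aff (of_int Q11) (of_int Q12) (of_int Q21) (of_int Q22) c1 c2 \<circ> \<Theta>"
proof -
  obtain e1 e2 where e: "e1 \<in> {1,-1}" "e2 \<in> {1,-1}"
   "\<Theta> = aff (\<kappa> * of_int e1) 0 0 (\<kappa> * of_int e2) (of_int kk + 1/2) (of_int ll + 1/2) \<or>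
    \<Theta> = aff 0 (\<kappa> * of_int e1) (\<kappa> * of_int e2) 0 (of_int kk + 1/2) (of_int ll + 1/2)" by (rule Theta_form')
  have q: "e1 = 1 \<or> e1 = -1" "e2 = 1 \<or> e2 = -1" using e(1,2) by auto
  have sp: "spat Q11 (e1*e2*Q12) (e1*e2*Q21) Q22" "spat Q22 (e1*e2*Q21) (e1*e2*Q12) Q11"
    using Q q unfolding spat_def by auto
  from e(3) show ?thesis
  proof
    assume T: "\<Theta> = aff (\<kappa> * of_int e1) 0 0 (\<kappa> * of_int e2) (of_int kk + 1/2) (of_int ll + 1/2)"
    define G where "G = aff (of_int Q11) (of_int (e1*e2*Q12)) (of_int (e1*e2*Q21)) (of_int Q22) 0 0"
    have "G \<in> D4" unfolding G_def D4_def using sp(1) by blast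
    moreover have "\<Theta> \<circ> G = aff (of_int Q11) (of_int Q12) (of_int Q21) (of_int Q22) c1 c2 \<circ> \<Theta>"
      unfolding T G_def aff_comp aff_eq_iff using q c1 c2
      by (elim disjE) (simp_all add: algebra_simps)
    ultimately show ?thesis by blast
  next
    assume T: "\<Theta> = aff 0 (\<kappa> * of_int e1) (\<kappa> * of_int e2) 0 (of_int kk + 1/2) (of_int ll + 1/2)"
    define G where "G = aff (of_int Q22) (of_int (e1*e2*Q21)) (of_int (e1*e2*Q12)) (of_int Q11) 0 0"
    have "G \<in> D4" unfolding G_def D4_def using sp(2) by blast
    moreover have "\<Theta> \<circ> G = aff (of_int Q11) (of_int Q12) (of_int Q21) (of_int Q22) c1 c2 \<circ> \<Theta>"
      unfolding T G_def aff_comp aff_eq_iff using q c1 c2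
      by (elim disjE) (simp_all add: algebra_simps)
    ultimately show ?thesis by blast
  qed
qed

lemma NA_decomp:
  assumes "\<alpha> \<in> NA M"
  shows "\<exists>g\<in>M. \<exists>G\<in>D4. \<alpha> = g \<circ> conj \<Phi> G"
proof -
  define \<psi> where "\<psi> = \<phi>' \<circ> \<alpha> \<circ> \<phi>"
  have "npred \<psi>" unfolding \<psi>_def using NA_npred NA_from_M assms by blast
  then obtain P11 P12 P21 P22 b1 b2 :: int where P: "spat P11 P12 P21 P22"
    "\<psi> = aff (of_int P11) (of_int P12) (of_int P21) (of_int P22) (of_int b1) (of_int b2)"
    unfolding npred_def spat_def by blast
  have r1: "(P11 = 1 \<or> P11 = -1) \<and> P12 = 0 \<or> P11 = 0 \<and> (P12 = 1 \<or> P12 = -1)"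
    and r2: "(P21 = 1 \<or> P21 = -1) \<and> P22 = 0 \<or> P21 = 0 \<and> (P22 = 1 \<or> P22 = -1)"
    using P(1) unfolding spat_def by auto
  obtain j1 where j1: "of_int P11 * (of_int kk + 1/2) + of_int P12 * (of_int ll + 1/2) + of_int b1 = of_int j1 + (1/2::real)"
    using halfint[OF r1] by blast
  obtain j2 where j2: "of_int P21 * (of_int kk + 1/2) + of_int P22 * (of_int ll + 1/2) + of_int b2 = of_int j2 + (1/2::real)"
    using halfint[OF r2] by blast
  obtain f1 m where f1: "f1 \<in> {1,-1}" "of_int f1 * (of_int j1 + 1/2) + 2 * of_int m = of_int kk + (1/2::real)"
    using fixpar by blast
  obtain f2 n where f2: "f2 \<in> {1,-1}" "of_int f2 * (of_int j2 + 1/2) + 2 * of_int n = of_int ll + (1/2::real)"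
    using fixpar by blast
  define p where "p = pmi f1 f2 m n"
  have pP: "p \<in> PP" unfolding p_def using f1(1) f2(1) by (rule PP_I)
  have pq: "p \<circ> \<psi> = aff (of_int (f1*P11)) (of_int (f1*P12)) (of_int (f2*P21)) (of_int (f2*P22))
      (of_int f1 * of_int b1 + 2 * of_int m) (of_int f2 * of_int b2 + 2 * of_int n)"
    unfolding p_def P(2) pmi_aff by simp
  have sQ: "spat (f1*P11) (f1*P12) (f2*P21) (f2*P22)" using P(1) f1(1) f2(1) unfolding spat_def by auto
  have cq1: "of_int (f1*P11) * (of_int kk + 1/2) + of_int (f1*P12) * (of_int ll + 1/2) + (of_int f1 * of_int b1 + 2 * of_int m) = of_int kk + (1/2::real)"
  proof -
    have "of_int (f1*P11) * (of_int kk + 1/2) + of_int (f1*P12) * (of_int ll + 1/2) + (of_int f1 * of_int b1 + 2 * of_int m)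
      = of_int f1 * (of_int P11 * (of_int kk + 1/2) + of_int P12 * (of_int ll + 1/2) + of_int b1) + 2 * (of_int m::real)"
      by (simp add: algebra_simps)
    then show ?thesis using j1 f1(2) by simp
  qed
  have cq2: "of_int (f2*P21) * (of_int kk + 1/2) + of_int (f2*P22) * (of_int ll + 1/2) + (of_int f2 * of_int b2 + 2 * of_int n) = of_int ll + (1/2::real)"
  proof -
    have "of_int (f2*P21) * (of_int kk + 1/2) + of_int (f2*P22) * (of_int ll + 1/2) + (of_int f2 * of_int b2 + 2 * of_int n)
      = of_int f2 * (of_int P21 * (of_int kk + 1/2) + of_int P22 * (of_int ll + 1/2) + of_int b2) + 2 * (of_int n::real)"
      by (simp add: algebra_simps)
    then show ?thesis using j2 f2(2) by simp
  qed
  obtain G where G: "G \<in> D4" "\<Theta> \<circ> G = (p \<circ> \<psi>) \<circ> \<Theta>"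
    using Theta_conj_D4[OF sQ cq1 cq2] unfolding pq by blast
  have cG: "conj \<Theta> G = p \<circ> \<psi>" using conj_eqI[OF Theta_bij G(2)] .
  obtain p' where p': "p' \<in> PP" "p \<circ> p' = id" "p' \<circ> p = id" using PP_inv_ex[OF pP] by blast
  have "\<psi> = p' \<circ> conj \<Theta> G" unfolding cG using p'(3) by (simp add: o_assoc)
  have a0: "\<phi> \<circ> \<psi> \<circ> \<phi>' = (\<phi> \<circ> \<phi>') \<circ> \<alpha> \<circ> (\<phi> \<circ> \<phi>')" unfolding \<psi>_def by (simp only: o_assoc)
  have a: "\<alpha> = \<phi> \<circ> \<psi> \<circ> \<phi>'" using a0 phi_phi' by simp
  have b0: "(\<phi> \<circ> p' \<circ> \<phi>') \<circ> (\<phi> \<circ> conj \<Theta> G \<circ> \<phi>') = \<phi> \<circ> p' \<circ> (\<phi>' \<circ> \<phi>) \<circ> conj \<Theta> G \<circ> \<phi>'"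
    by (simp only: o_assoc)
  have b1: "\<phi> \<circ> \<psi> \<circ> \<phi>' = \<phi> \<circ> p' \<circ> conj \<Theta> G \<circ> \<phi>'" unfolding \<open>\<psi> = p' \<circ> conj \<Theta> G\<close> by (simp only: o_assoc)
  have "\<alpha> = (\<phi> \<circ> p' \<circ> \<phi>') \<circ> (\<phi> \<circ> conj \<Theta> G \<circ> \<phi>')" using a b0 b1 phi'_phi by simp
  then have "\<alpha> = conj \<phi> p' \<circ> conj \<Phi> G" unfolding conj_Phi conj_phi_eq .
  moreover have "conj \<phi> p' \<in> M" unfolding Mdef using p'(1) by blast
  ultimately show ?thesis using G(1) by blast
qed

end

lemma dist2: "dist (a::pt) b = sqrt ((a$1 - b$1)^2 + (a$2 - b$2)^2)"
  unfolding dist_norm norm_eq_sqrt_inner by (simp add: inner_vec_def sum_2 power2_eq_square)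

lemma npred_id: "npred id"
  unfolding npred_def aff_id[symmetric] by (intro exI[of _ 1] exI[of _ 0] exI[of _ 0] exI[of _ 1] exI[of _ 0] exI[of _ 0]) simp

lemma dist_D4: assumes "G \<in> D4" shows "dist (G a) (G b) = dist a b"
  using assms unfolding D4_def spat_def dist2
  by (auto simp: power2_eq_square algebra_simps)

context setting
begin

lemma NA_comp: assumes "\<alpha> \<in> NA M" "\<beta> \<in> NA M" shows "\<alpha> \<circ> \<beta> \<in> NA M"
proof -
  have a: "affine_auto \<alpha>" "affine_auto \<beta>" using assms unfolding NA_def by blast+
  have "conj (\<alpha> \<circ> \<beta>) ` M = conj \<alpha> ` conj \<beta> ` M" using conj_img affine_auto_bij a by blast
  also have "\<dots> = M" using assms unfolding NA_def by simp
  finally show ?thesis unfolding NA_def using affine_auto_comp[OF a] by blast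
qed

lemma id_NA: "id \<in> NA M" using M_NA M_id by blast

lemma D4_npred: assumes "G \<in> D4" shows "npred (conj \<Theta> G)"
proof -
  have c: "conj \<Theta> (a \<circ> b) = conj \<Theta> a \<circ> conj \<Theta> b" for a b using conj_comp[OF Theta_bij] .
  have s: "npred (conj \<Theta> sgm)" "npred (conj \<Theta> swp)" using conjTheta_sgm conjTheta_swp .
  have i: "npred (conj \<Theta> id)" using conj_eqI[OF Theta_bij, of id id] npred_id by simp
  show ?thesis using assms unfolding D4_words
    by (auto simp: c intro!: npred_comp s i)
qed

lemma W_NA: "G \<in> D4 \<Longrightarrow> conj \<Phi> G \<in> NA M" using NA_via_Theta D4_npred by blast

lemma Phi_conj_apply: "conj \<Phi> G (\<Phi> y) = \<Phi> (G y)"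
  using conj_eqD[OF Phi_bij refl, of G] by (metis comp_apply)

lemma indaff_eqI:
  assumes "\<And>x. indaff M \<alpha> (orb M x) = indaff M \<beta> (orb M x)"
  shows "indaff M \<alpha> = indaff M \<beta>"
proof
  fix Ob show "indaff M \<alpha> Ob = indaff M \<beta> Ob"
  proof (cases "Ob \<in> OrbSp M")
    case True then obtain x where "Ob = orb M x" unfolding OrbSp_def by blast
    then show ?thesis using assms by simp
  next
    case False then show ?thesis unfolding indaff_def by simp
  qed
qed

lemma indaff_gw: assumes "g \<in> M" "w \<in> NA M" shows "indaff M (g \<circ> w) = indaff M w"
proof (rule indaff_eqI)
  fix x
  have "g \<circ> w \<in> NA M" using NA_comp M_NA assms by blast
  then show "indaff M (g \<circ> w) (orb M x) = indaff M w (orb M x)"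
    using indaff_orb assms orb_g by simp
qed

lemma Aff_eq: "Aff M = (\<lambda>G. indaff M (conj \<Phi> G)) ` D4"
proof
  show "Aff M \<subseteq> (\<lambda>G. indaff M (conj \<Phi> G)) ` D4"
  proof
    fix F assume "F \<in> Aff M"
    then obtain \<alpha> where a: "\<alpha> \<in> NA M" "F = indaff M \<alpha>" unfolding Aff_def by blast
    obtain g G where gG: "g \<in> M" "G \<in> D4" "\<alpha> = g \<circ> conj \<Phi> G" using NA_decomp[OF a(1)] by blast
    have "F = indaff M (conj \<Phi> G)" using a(2) gG indaff_gw W_NA by simp
    then show "F \<in> (\<lambda>G. indaff M (conj \<Phi> G)) ` D4" using gG(2) by blast
  qed
  show "(\<lambda>G. indaff M (conj \<Phi> G)) ` D4 \<subseteq> Aff M" unfolding Aff_def using W_NA by blast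
qed

lemma indaff_W_inj:
  assumes G: "G1 \<in> D4" "G2 \<in> D4" and e: "indaff M (conj \<Phi> G1) = indaff M (conj \<Phi> G2)"
  shows "G1 = G2"
proof -
  have pt: "G1 y = G2 y" if y: "y \<in> sqo s" for y
  proof -
    have "orb M (\<Phi> (G1 y)) = orb M (\<Phi> (G2 y))"
      using e indaff_orb[OF W_NA[OF G(1)], of "\<Phi> y"] indaff_orb[OF W_NA[OF G(2)], of "\<Phi> y"]
      by (simp add: Phi_conj_apply)
    then show ?thesis using inj_sqo D4_sqo G y by blast
  qed
  have y: "vector [s/2, 0] \<in> sqo s" "vector [0, s/2] \<in> sqo s" unfolding sqo_def using uv(4) by simp_all
  obtain a b c' d where 1: "G1 = aff (of_int a) (of_int b) (of_int c') (of_int d) 0 0" using G(1) unfolding D4_def by blast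
  obtain a' b' c'' d' where 2: "G2 = aff (of_int a') (of_int b') (of_int c'') (of_int d') 0 0" using G(2) unfolding D4_def by blast
  have "of_int a * (s/2) = of_int a' * (s/2)" "of_int c' * (s/2) = of_int c'' * (s/2)"
    using pt[OF y(1)] unfolding 1 2 by (simp_all add: vec2_eq_iff)
  moreover have "of_int b * (s/2) = of_int b' * (s/2)" "of_int d * (s/2) = of_int d' * (s/2)"
    using pt[OF y(2)] unfolding 1 2 by (simp_all add: vec2_eq_iff)
  ultimately have "a = a'" "b = b'" "c' = c''" "d = d'" using uv(4) by simp_all
  then show ?thesis unfolding 1 2 by simp
qed

lemma inj_on_W: "inj_on (\<lambda>G. indaff M (conj \<Phi> G)) D4"
  using indaff_W_inj by (auto simp: inj_on_def)

lemma card_Aff: "card (Aff M) = 8"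
  unfolding Aff_eq using card_image[OF inj_on_W] card_D4 by simp

lemma dist_Phi: "dist (\<Phi> a) (\<Phi> b) = dist a b"
proof -
  have "\<Phi> a - \<Phi> b = (a$1 - b$1) *\<^sub>R u + (a$2 - b$2) *\<^sub>R v" unfolding Phi_apply by (simp add: algebra_simps)
  then have "(\<Phi> a - \<Phi> b) \<bullet> (\<Phi> a - \<Phi> b) = (a$1 - b$1)^2 + (a$2 - b$2)^2"
    by (simp add: inner_add_left inner_add_right inner_uv power2_eq_square)
  moreover have "dist (\<Phi> a) (\<Phi> b) = sqrt ((\<Phi> a - \<Phi> b) \<bullet> (\<Phi> a - \<Phi> b))" by (simp add: dist_norm norm_eq_sqrt_inner)
  ultimately show ?thesis using dist2[of a b] by simp
qed

lemma W_isom: assumes "G \<in> D4" shows "dist (conj \<Phi> G x) (conj \<Phi> G y) = dist x y"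
proof -
  obtain a where a: "x = \<Phi> a" using Phi_bij by (metis bij_pointE)
  obtain b where b: "y = \<Phi> b" using Phi_bij by (metis bij_pointE)
  show ?thesis unfolding a b Phi_conj_apply dist_Phi dist_D4[OF assms] ..
qed

lemma qdist_pres:
  assumes w: "w \<in> NA M" and iso: "\<And>x y. dist (w x) (w y) = dist x y"
  shows "qdist (indaff M w (orb M x)) (indaff M w (orb M y)) = qdist (orb M x) (orb M y)"
proof -
  have "{dist a b | a b. a \<in> w ` orb M x \<and> b \<in> w ` orb M y} = {dist a b | a b. a \<in> orb M x \<and> b \<in> orb M y}"
  proof (intro equalityI subsetI)
    fix z assume "z \<in> {dist a b | a b. a \<in> w ` orb M x \<and> b \<in> w ` orb M y}"
    then obtain a b where "a \<in> orb M x" "b \<in> orb M y" "z = dist (w a) (w b)" by blast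
    then show "z \<in> {dist a b | a b. a \<in> orb M x \<and> b \<in> orb M y}" using iso by auto
  next
    fix z assume "z \<in> {dist a b | a b. a \<in> orb M x \<and> b \<in> orb M y}"
    then obtain a b where ab: "a \<in> orb M x" "b \<in> orb M y" "z = dist a b" by blast
    then have "z = dist (w a) (w b)" using iso by simp
    then show "z \<in> {dist a b | a b. a \<in> w ` orb M x \<and> b \<in> w ` orb M y}" using ab by blast
  qed
  then show ?thesis unfolding qdist_def indaff_orb[OF w] orb_NA[OF w] by simp
qed

lemma Sym_eq: "Sym M = Aff M"
proof
  show "Sym M \<subseteq> Aff M" unfolding Sym_def by blast
  show "Aff M \<subseteq> Sym M"
  proof
    fix F assume F: "F \<in> Aff M"
    then obtain G where G: "G \<in> D4" "F = indaff M (conj \<Phi> G)" unfolding Aff_eq by blast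
    have "qdist (F Ob) (F Ob2) = qdist Ob Ob2" if "Ob \<in> OrbSp M" "Ob2 \<in> OrbSp M" for Ob Ob2
      using that qdist_pres[OF W_NA[OF G(1)] W_isom[OF G(1)]] unfolding G(2) OrbSp_def by blast
    then show "F \<in> Sym M" unfolding Sym_def using F by blast
  qed
qed

end

context setting
begin

lemma inv_NA: assumes "\<alpha> \<in> NA M" shows "inv_into UNIV \<alpha> \<in> NA M"
proof -
  obtain p q r t b1 b2 where a: "p*t - q*r \<noteq> 0" "\<alpha> = aff p q r t b1 b2"
    using assms unfolding NA_def affine_auto_aff by blast
  have af: "affine_auto (inv_into UNIV \<alpha>)" unfolding a(2) aff_inv[OF a(1)] affine_auto_aff
    using affinv_ex[OF a(1)] by blast
  have b: "bij \<alpha>" using aff_bij[OF a(1)] a(2) by simp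
  have "conj (inv_into UNIV \<alpha>) ` M = conj (inv_into UNIV \<alpha>) ` conj \<alpha> ` M"
    using assms unfolding NA_def by simp
  also have "\<dots> = conj (inv_into UNIV \<alpha> \<circ> \<alpha>) ` M" using conj_img[OF bij_imp_bij_inv[OF b] b] by simp
  also have "\<dots> = M" using bij_comp_inv[OF b] by simp
  finally show ?thesis unfolding NA_def using af by blast
qed

lemma indaff_id: "indaff M id = (\<lambda>Ob\<in>OrbSp M. Ob)"
proof
  fix Ob show "indaff M id Ob = (\<lambda>Ob\<in>OrbSp M. Ob) Ob"
  proof (cases "Ob \<in> OrbSp M")
    case True then obtain x where "Ob = orb M x" unfolding OrbSp_def by blast
    then show ?thesis using indaff_orb[OF id_NA] True by simp
  next
    case False then show ?thesis unfolding indaff_def by simp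
  qed
qed

lemma indaff_mult: assumes "\<alpha> \<in> NA M" "\<beta> \<in> NA M"
  shows "indaff M (\<alpha> \<circ> \<beta>) = (\<lambda>Ob\<in>OrbSp M. indaff M \<alpha> (indaff M \<beta> Ob))"
proof
  fix Ob show "indaff M (\<alpha> \<circ> \<beta>) Ob = (\<lambda>Ob\<in>OrbSp M. indaff M \<alpha> (indaff M \<beta> Ob)) Ob"
  proof (cases "Ob \<in> OrbSp M")
    case True then obtain x where "Ob = orb M x" unfolding OrbSp_def by blast
    then show ?thesis using indaff_orb[OF NA_comp[OF assms]] indaff_orb[OF assms(1)] indaff_orb[OF assms(2)] True by simp
  next
    case False then show ?thesis unfolding indaff_def by simp
  qed
qed

lemma AffG_simps: "carrier (AffG M) = Aff M" "mult (AffG M) = (\<lambda>F G. \<lambda>Ob\<in>OrbSp M. F (G Ob))"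
  "one (AffG M) = indaff M id"
  unfolding AffG_def indaff_id by simp_all

lemma AffG_mult_indaff: "\<alpha> \<in> NA M \<Longrightarrow> \<beta> \<in> NA M \<Longrightarrow> indaff M \<alpha> \<otimes>\<^bsub>AffG M\<^esub> indaff M \<beta> = indaff M (\<alpha> \<circ> \<beta>)"
  unfolding AffG_simps indaff_mult by simp

lemma AffG_elem: assumes "x \<in> carrier (AffG M)" obtains \<alpha> where "\<alpha> \<in> NA M" "x = indaff M \<alpha>"
proof -
  have "x \<in> indaff M ` NA M" using assms unfolding AffG_simps Aff_def .
  then show ?thesis using that by blast
qed

lemma group_AffG: "group (AffG M)"
proof (rule groupI)
  show "x \<otimes>\<^bsub>AffG M\<^esub> y \<in> carrier (AffG M)" if H: "x \<in> carrier (AffG M)" "y \<in> carrier (AffG M)" for x y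
  proof -
    obtain \<alpha> where "\<alpha> \<in> NA M" "x = indaff M \<alpha>" using H(1) by (rule AffG_elem)
    moreover obtain \<beta> where "\<beta> \<in> NA M" "y = indaff M \<beta>" using H(2) by (rule AffG_elem)
    ultimately show ?thesis using AffG_mult_indaff NA_comp unfolding AffG_simps(1) Aff_def by simp
  qed
  show "\<one>\<^bsub>AffG M\<^esub> \<in> carrier (AffG M)" unfolding AffG_simps Aff_def using id_NA by blast
  show "x \<otimes>\<^bsub>AffG M\<^esub> y \<otimes>\<^bsub>AffG M\<^esub> z = x \<otimes>\<^bsub>AffG M\<^esub> (y \<otimes>\<^bsub>AffG M\<^esub> z)"
    if H: "x \<in> carrier (AffG M)" "y \<in> carrier (AffG M)" "z \<in> carrier (AffG M)" for x y z
  proof -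
    obtain \<alpha> where h1: "\<alpha> \<in> NA M" "x = indaff M \<alpha>" using H(1) by (rule AffG_elem)
    obtain \<beta> where h2: "\<beta> \<in> NA M" "y = indaff M \<beta>" using H(2) by (rule AffG_elem)
    obtain \<gamma> where h3: "\<gamma> \<in> NA M" "z = indaff M \<gamma>" using H(3) by (rule AffG_elem)
    show ?thesis unfolding h1(2) h2(2) h3(2) using h1(1) h2(1) h3(1) NA_comp by (simp add: AffG_mult_indaff o_assoc)
  qed
  show "\<one>\<^bsub>AffG M\<^esub> \<otimes>\<^bsub>AffG M\<^esub> x = x" if H: "x \<in> carrier (AffG M)" for x
  proof -
    obtain \<alpha> where h: "\<alpha> \<in> NA M" "x = indaff M \<alpha>" using H by (rule AffG_elem)
    show ?thesis unfolding h(2) AffG_simps(3) using AffG_mult_indaff[OF id_NA h(1)] by simp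
  qed
  show "\<exists>y\<in>carrier (AffG M). y \<otimes>\<^bsub>AffG M\<^esub> x = \<one>\<^bsub>AffG M\<^esub>" if H: "x \<in> carrier (AffG M)" for x
  proof -
    obtain \<alpha> where h: "\<alpha> \<in> NA M" "x = indaff M \<alpha>" using H by (rule AffG_elem)
    have b: "bij \<alpha>" using h(1) affine_auto_bij unfolding NA_def by blast
    have "indaff M (inv_into UNIV \<alpha>) \<otimes>\<^bsub>AffG M\<^esub> x = \<one>\<^bsub>AffG M\<^esub>"
      unfolding h(2) AffG_mult_indaff[OF inv_NA[OF h(1)] h(1)] bij_comp_inv[OF b] AffG_simps(3) ..
    moreover have "indaff M (inv_into UNIV \<alpha>) \<in> carrier (AffG M)" unfolding AffG_simps Aff_def using inv_NA[OF h(1)] by blast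
    ultimately show ?thesis by blast
  qed
qed

abbreviation "mr \<equiv> refl_line c v"
abbreviation "dr \<equiv> refl_line c ((1 / sqrt 2) *\<^sub>R (u + v))"

lemma W8: "(\<lambda>G. conj \<Phi> G) ` D4 = {id, mr, dr, mr \<circ> dr, dr \<circ> mr, mr \<circ> dr \<circ> mr, dr \<circ> mr \<circ> dr, mr \<circ> dr \<circ> mr \<circ> dr}"
proof -
  have i: "conj \<Phi> id = id" by (rule conj_eqI[OF Phi_bij]) simp
  show ?thesis unfolding D4_words mref_eq dref_eq using i conj_comp[OF Phi_bij] by simp
qed

lemma gen_eq: "generate (AffG M) {indaff M mr, indaff M dr} = Aff M"
proof
  have "{indaff M mr, indaff M dr} \<subseteq> carrier (AffG M)" unfolding AffG_simps Aff_def using mref_NA dref_NA by blast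
  then show "generate (AffG M) {indaff M mr, indaff M dr} \<subseteq> Aff M"
    using group.generate_in_carrier[OF group_AffG] unfolding AffG_simps by blast
next
  let ?g = "generate (AffG M) {indaff M mr, indaff M dr}"
  have st: "indaff M (a \<circ> b) \<in> ?g" if "a \<in> NA M" "b \<in> NA M" "indaff M a \<in> ?g" "indaff M b \<in> ?g" for a b
    using generate.eng[OF that(3,4)] AffG_mult_indaff[OF that(1,2)] by simp
  have m: "indaff M mr \<in> ?g" "indaff M dr \<in> ?g" by (simp_all add: generate.incl)
  have i: "indaff M id \<in> ?g" using generate.one[of "AffG M"] AffG_simps(3) by simp
  note N = mref_NA dref_NA NA_comp
  show "Aff M \<subseteq> ?g" unfolding Aff_eq
  proof
    fix F assume "F \<in> (\<lambda>G. indaff M (conj \<Phi> G)) ` D4"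
    then have "F \<in> indaff M ` (\<lambda>G. conj \<Phi> G) ` D4" by (simp add: image_image)
    then have "F \<in> indaff M ` {id, mr, dr, mr \<circ> dr, dr \<circ> mr, mr \<circ> dr \<circ> mr, dr \<circ> mr \<circ> dr, mr \<circ> dr \<circ> mr \<circ> dr}"
      unfolding W8 .
    then show "F \<in> ?g" using i m by (auto intro!: st N)
  qed
qed

end

context setting
begin

abbreviation "GM \<equiv> map_group M"
abbreviation "AutM \<equiv> AutoGroup (map_group M)"

lemma GM_simps[simp]: "carrier GM = M" "mult GM = (\<circ>)" "one GM = id"
  unfolding map_group_def by simp_all

lemma group_GM: "group GM"
proof (rule groupI)
  show "x \<otimes>\<^bsub>GM\<^esub> y \<in> carrier GM" if "x \<in> carrier GM" "y \<in> carrier GM" for x y using that M_comp by simp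
  show "\<one>\<^bsub>GM\<^esub> \<in> carrier GM" using M_id by simp
  show "x \<otimes>\<^bsub>GM\<^esub> y \<otimes>\<^bsub>GM\<^esub> z = x \<otimes>\<^bsub>GM\<^esub> (y \<otimes>\<^bsub>GM\<^esub> z)" for x y z by (simp add: o_assoc)
  show "\<one>\<^bsub>GM\<^esub> \<otimes>\<^bsub>GM\<^esub> x = x" for x by simp
  show "\<exists>y\<in>carrier GM. y \<otimes>\<^bsub>GM\<^esub> x = \<one>\<^bsub>GM\<^esub>" if H: "x \<in> carrier GM" for x
  proof -
    obtain g' where "g' \<in> M" "g' \<circ> x = id" using M_inv H by auto
    then show ?thesis by auto
  qed
qed

lemma inv_GM: assumes "g \<in> M" shows "inv\<^bsub>GM\<^esub> g = inv_into UNIV g" "inv_into UNIV g \<in> M"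
proof -
  obtain g' where g': "g' \<in> M" "g \<circ> g' = id" "g' \<circ> g = id" using M_inv[OF assms] by blast
  have "inv_into UNIV g = g'" using g'(2,3) inv_unique_comp by blast
  moreover have "inv\<^bsub>GM\<^esub> g = g'" using group.inv_equality[OF group_GM, of g' g] g' assms by simp
  ultimately show "inv\<^bsub>GM\<^esub> g = inv_into UNIV g" "inv_into UNIV g \<in> M" using g'(1) by simp_all
qed

definition cM :: "emap \<Rightarrow> emap \<Rightarrow> emap" where "cM \<alpha> = (\<lambda>g\<in>M. conj \<alpha> g)"

lemma inn_eq: "inn GM = cM ` M"
proof -
  have "(\<lambda>x\<in>M. a \<circ> x \<circ> inv\<^bsub>GM\<^esub> a) = cM a" if "a \<in> M" for a
    unfolding cM_def conj_def inv_GM(1)[OF that] by simp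
  moreover have "inn GM = (\<lambda>a. \<lambda>x\<in>M. a \<circ> x \<circ> inv\<^bsub>GM\<^esub> a) ` M"
    unfolding inn_def GM_simps by (simp only: Setcompr_eq_image)
  ultimately show ?thesis by (simp cong: image_cong)
qed

lemma NA_bij: "\<alpha> \<in> NA M \<Longrightarrow> bij \<alpha>" unfolding NA_def using affine_auto_bij by blast

lemma cM_auto: assumes "\<alpha> \<in> NA M" shows "cM \<alpha> \<in> auto GM"
proof -
  have b: "bij \<alpha>" using NA_bij assms .
  have img: "conj \<alpha> ` M = M" using assms unfolding NA_def by blast
  have "cM \<alpha> \<in> hom GM GM" unfolding hom_def cM_def using img conj_comp[OF b] M_comp by auto
  moreover have "cM \<alpha> \<in> Bij M" unfolding Bij_def cM_def
  proof (intro IntI CollectI)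
    show "(\<lambda>g\<in>M. conj \<alpha> g) \<in> extensional M" by simp
    have "inj_on (conj \<alpha>) M" using conj_inj[OF b] by (auto simp: inj_on_def)
    then show "bij_betw (\<lambda>g\<in>M. conj \<alpha> g) M M" using img unfolding bij_betw_def
      by (simp add: inj_on_def)
  qed
  ultimately show ?thesis unfolding auto_def GM_simps by blast
qed

lemma Aut_simps: "carrier AutM = auto GM" "one AutM = (\<lambda>x\<in>M. x)"
  "f \<in> Bij M \<Longrightarrow> g \<in> Bij M \<Longrightarrow> f \<otimes>\<^bsub>AutM\<^esub> g = compose M f g"
  unfolding AutoGroup_def BijGroup_def by simp_all

lemma auto_Bij: "f \<in> auto GM \<Longrightarrow> f \<in> Bij M" unfolding auto_def by simp

lemma cM_mult: assumes "\<alpha> \<in> NA M" "\<beta> \<in> NA M" shows "cM \<alpha> \<otimes>\<^bsub>AutM\<^esub> cM \<beta> = cM (\<alpha> \<circ> \<beta>)"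
proof -
  have "cM \<alpha> \<otimes>\<^bsub>AutM\<^esub> cM \<beta> = compose M (cM \<alpha>) (cM \<beta>)"
    using Aut_simps(3) auto_Bij cM_auto assms by blast
  also have "\<dots> = cM (\<alpha> \<circ> \<beta>)" unfolding compose_def cM_def
  proof (rule ext)
    fix x show "(\<lambda>x\<in>M. (\<lambda>g\<in>M. conj \<alpha> g) ((\<lambda>g\<in>M. conj \<beta> g) x)) x = (\<lambda>g\<in>M. conj (\<alpha> \<circ> \<beta>) g) x"
    proof (cases "x \<in> M")
      case True
      have "conj \<beta> x \<in> M" using True assms(2) unfolding NA_def by blast
      then show ?thesis using True conj_conj[OF NA_bij[OF assms(1)] NA_bij[OF assms(2)]] by simp
    qed simp
  qed
  finally show ?thesis .
qed

lemma cM_id: "cM id = \<one>\<^bsub>AutM\<^esub>"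
proof -
  have "conj id = (\<lambda>g. g)" by (rule ext) simp
  then show ?thesis unfolding cM_def Aut_simps by simp
qed

lemma group_Aut: "group AutM" using group.AutoGroup[OF group_GM] .

lemma inv_cM: assumes "\<alpha> \<in> NA M" shows "inv\<^bsub>AutM\<^esub> (cM \<alpha>) = cM (inv_into UNIV \<alpha>)"
proof (rule group.inv_equality[OF group_Aut])
  show "cM (inv_into UNIV \<alpha>) \<otimes>\<^bsub>AutM\<^esub> cM \<alpha> = \<one>\<^bsub>AutM\<^esub>"
    unfolding cM_mult[OF inv_NA[OF assms] assms] bij_comp_inv[OF NA_bij[OF assms]] cM_id ..
  show "cM \<alpha> \<in> carrier AutM" "cM (inv_into UNIV \<alpha>) \<in> carrier AutM"
    unfolding Aut_simps using cM_auto assms inv_NA by blast+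
qed

lemma classify: assumes f: "f \<in> auto GM" shows "\<exists>\<alpha>\<in>NA M. f = cM \<alpha>"
proof -
  have hom: "f (a \<circ> b) = f a \<circ> f b" if "a \<in> M" "b \<in> M" for a b
    using f that unfolding auto_def hom_def by simp
  have bb: "bij_betw f M M" and ext: "f \<in> extensional M" using f unfolding auto_def Bij_def by simp_all
  have fM: "f ` M = M" using bb bij_betw_imp_surj_on by blast
  have fi: "inj_on f M" using bb bij_betw_imp_inj_on by blast
  define f' where "f' = (\<lambda>p. conj \<phi>' (f (conj \<phi> p)))"
  have cpM: "conj \<phi> p \<in> M" if "p \<in> PP" for p using that Mdef by blast
  have "autP f'"
  proof
    show "f' (a \<circ> b) = f' a \<circ> f' b" if "a \<in> PP" "b \<in> PP" for a b
      unfolding f'_def conj_comp[OF phi_bij] hom[OF cpM[OF that(1)] cpM[OF that(2)]] conj_comp[OF phi'_bij] ..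
    have "f' ` PP = conj \<phi>' ` f ` conj \<phi> ` PP" unfolding f'_def by (simp add: image_image)
    also have "\<dots> = PP" unfolding Mdef[symmetric] fM unfolding Mdef image_image conj_phi'_phi by simp
    finally show "f' ` PP = PP" .
    show "inj_on f' PP"
    proof (rule inj_onI)
      fix a b assume ab: "a \<in> PP" "b \<in> PP" "f' a = f' b"
      then have "f (conj \<phi> a) = f (conj \<phi> b)" unfolding f'_def using conj_inj[OF phi'_bij] by blast
      then have "conj \<phi> a = conj \<phi> b" using fi cpM ab(1,2) by (meson inj_onD)
      then show "a = b" using conj_inj[OF phi_bij] by blast
    qed
  qed
  then obtain \<psi> where \<psi>: "npred \<psi>" "\<forall>p\<in>PP. f' p = conj \<psi> p" using autP_classify by blast
  define \<alpha> where "\<alpha> = \<phi> \<circ> \<psi> \<circ> \<phi>'"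
  have aNA: "\<alpha> \<in> NA M" unfolding \<alpha>_def using NA_to_M npred_NA \<psi>(1) by blast
  have bpsi: "bij \<psi>" using npred_affine \<psi>(1) by blast
  have "f = cM \<alpha>"
  proof
    fix x show "f x = cM \<alpha> x"
    proof (cases "x \<in> M")
      case True
      then obtain p where p: "p \<in> PP" "x = conj \<phi> p" using Mdef by blast
      have "f x = conj \<phi> (f' p)" unfolding f'_def p(2) conj_phi_phi' ..
      also have "\<dots> = conj \<phi> (conj \<psi> p)" using \<psi>(2) p(1) by simp
      also have "\<dots> = conj (\<phi> \<circ> \<psi>) p" using conj_conj[OF phi_bij bpsi] .
      also have "\<phi> \<circ> \<psi> = \<alpha> \<circ> \<phi>" unfolding \<alpha>_def using phi'_phi by (simp add: o_assoc[symmetric])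
      also have "conj (\<alpha> \<circ> \<phi>) p = conj \<alpha> x" unfolding p(2) using conj_conj[OF NA_bij[OF aNA] phi_bij] by simp
      finally show ?thesis unfolding cM_def using True by simp
    next
      case False then show ?thesis using ext unfolding cM_def by (simp add: extensional_def)
    qed
  qed
  then show ?thesis using aNA by blast
qed

lemma inn_subgroup: "subgroup (inn GM) AutM"
proof (rule group.subgroupI[OF group_Aut])
  show "inn GM \<subseteq> carrier AutM" unfolding inn_eq Aut_simps using cM_auto M_NA by blast
  show "inn GM \<noteq> {}" unfolding inn_eq using M_id by blast
  show "inv\<^bsub>AutM\<^esub> a \<in> inn GM" if H: "a \<in> inn GM" for a
  proof -
    obtain g where g: "g \<in> M" "a = cM g" using H unfolding inn_eq by blast
    show ?thesis unfolding g(2) inv_cM[OF M_NA[OF g(1)]] inn_eq using inv_GM(2)[OF g(1)] by blast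
  qed
  show "a \<otimes>\<^bsub>AutM\<^esub> b \<in> inn GM" if H: "a \<in> inn GM" "b \<in> inn GM" for a b
  proof -
    obtain g where g: "g \<in> M" "a = cM g" using H(1) unfolding inn_eq by blast
    obtain h where h: "h \<in> M" "b = cM h" using H(2) unfolding inn_eq by blast
    show ?thesis unfolding g(2) h(2) cM_mult[OF M_NA[OF g(1)] M_NA[OF h(1)]] inn_eq using M_comp g(1) h(1) by blast
  qed
qed

lemma inn_normal: "inn GM \<lhd> AutM"
  unfolding group.normal_inv_iff[OF group_Aut]
proof (intro conjI ballI)
  show "subgroup (inn GM) AutM" by (rule inn_subgroup)
  fix x h assume x: "x \<in> carrier AutM" and h: "h \<in> inn GM"
  obtain \<alpha> where a: "\<alpha> \<in> NA M" "x = cM \<alpha>" using classify x unfolding Aut_simps by blast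
  obtain g where g: "g \<in> M" "h = cM g" using h unfolding inn_eq by blast
  have "x \<otimes>\<^bsub>AutM\<^esub> h \<otimes>\<^bsub>AutM\<^esub> inv\<^bsub>AutM\<^esub> x = cM (\<alpha> \<circ> g \<circ> inv_into UNIV \<alpha>)"
    unfolding a(2) g(2) inv_cM[OF a(1)] cM_mult[OF a(1) M_NA[OF g(1)]]
    using cM_mult[OF NA_comp[OF a(1) M_NA[OF g(1)]] inv_NA[OF a(1)]] by simp
  moreover have "\<alpha> \<circ> g \<circ> inv_into UNIV \<alpha> \<in> M" using a(1) g(1) unfolding NA_def conj_def by blast
  ultimately show "x \<otimes>\<^bsub>AutM\<^esub> h \<otimes>\<^bsub>AutM\<^esub> inv\<^bsub>AutM\<^esub> x \<in> inn GM" unfolding inn_eq by simp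
qed

end

context setting
begin

lemma indaff_eq_M:
  assumes a: "\<alpha> \<in> NA M" and b: "\<beta> \<in> NA M" and e: "indaff M \<alpha> = indaff M \<beta>"
  shows "\<exists>g\<in>M. \<alpha> = g \<circ> \<beta>"
proof -
  obtain g1 G1 where 1: "g1 \<in> M" "G1 \<in> D4" "\<alpha> = g1 \<circ> conj \<Phi> G1" using NA_decomp[OF a] by blast
  obtain g2 G2 where 2: "g2 \<in> M" "G2 \<in> D4" "\<beta> = g2 \<circ> conj \<Phi> G2" using NA_decomp[OF b] by blast
  have "indaff M (conj \<Phi> G1) = indaff M (conj \<Phi> G2)"
    using e 1 2 indaff_gw W_NA by simp
  then have G: "G1 = G2" using indaff_W_inj 1(2) 2(2) by blast
  obtain g2' where g2': "g2' \<in> M" "g2' \<circ> g2 = id" using M_inv[OF 2(1)] by blast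
  have "\<alpha> = (g1 \<circ> g2') \<circ> \<beta>"
  proof -
    have "(g1 \<circ> g2') \<circ> \<beta> = g1 \<circ> (g2' \<circ> g2) \<circ> conj \<Phi> G1" unfolding 2(3) G by (simp only: o_assoc)
    then show ?thesis using g2'(2) 1(3) by simp
  qed
  then show ?thesis using M_comp[OF 1(1) g2'(1)] by blast
qed

lemma cM_carrier: "\<alpha> \<in> NA M \<Longrightarrow> cM \<alpha> \<in> carrier AutM" unfolding Aut_simps by (rule cM_auto)

lemma inn_carrier: "inn GM \<subseteq> carrier AutM" using inn_subgroup subgroup.subset by blast

lemma coset_g:
  assumes g: "g \<in> M" and b: "\<beta> \<in> NA M"
  shows "inn GM #>\<^bsub>AutM\<^esub> cM (g \<circ> \<beta>) = inn GM #>\<^bsub>AutM\<^esub> cM \<beta>"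
proof -
  have gN: "g \<in> NA M" using M_NA[OF g] .
  have "inn GM #>\<^bsub>AutM\<^esub> cM (g \<circ> \<beta>) = inn GM #>\<^bsub>AutM\<^esub> (cM g \<otimes>\<^bsub>AutM\<^esub> cM \<beta>)"
    unfolding cM_mult[OF gN b] ..
  also have "\<dots> = (inn GM #>\<^bsub>AutM\<^esub> cM g) #>\<^bsub>AutM\<^esub> cM \<beta>"
    using group.coset_mult_assoc[OF group_Aut inn_carrier cM_carrier[OF gN] cM_carrier[OF b]] by simp
  also have "inn GM #>\<^bsub>AutM\<^esub> cM g = inn GM"
    using group.coset_join2[OF group_Aut cM_carrier[OF gN] inn_subgroup] g unfolding inn_eq by blast
  finally show ?thesis .
qed

lemma Omega_indaff: assumes a: "\<alpha> \<in> NA M" shows "Omega M (indaff M \<alpha>) = inn GM #>\<^bsub>AutM\<^esub> cM \<alpha>"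
proof -
  define \<gamma> where "\<gamma> = (SOME \<gamma>. \<gamma> \<in> NA M \<and> indaff M \<gamma> = indaff M \<alpha>)"
  have "\<gamma> \<in> NA M \<and> indaff M \<gamma> = indaff M \<alpha>" unfolding \<gamma>_def by (rule someI[of _ \<alpha>]) (simp add: a)
  then obtain g where g: "g \<in> M" "\<gamma> = g \<circ> \<alpha>" using indaff_eq_M a by blast
  have "Omega M (indaff M \<alpha>) = inn GM #>\<^bsub>AutM\<^esub> cM \<gamma>"
    unfolding Omega_def Omega_nrm_def \<gamma>_def[symmetric] cM_def ..
  also have "\<dots> = inn GM #>\<^bsub>AutM\<^esub> cM \<alpha>" unfolding g(2) using coset_g g(1) a by blast
  finally show ?thesis .
qed

lemma cM_inj:
  assumes a: "\<alpha> \<in> NA M" and c: "\<gamma> \<in> NA M" and e: "cM \<alpha> = cM \<gamma>"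
  shows "\<alpha> = \<gamma>"
proof -
  define \<epsilon> where "\<epsilon> = inv_into UNIV \<gamma> \<circ> \<alpha>"
  have eN: "\<epsilon> \<in> NA M" unfolding \<epsilon>_def using NA_comp inv_NA a c by blast
  have bg: "bij \<gamma>" "bij \<alpha>" using NA_bij a c by blast+
  have com: "\<epsilon> \<circ> x = x \<circ> \<epsilon>" if x: "x \<in> M" for x
  proof -
    have "conj \<alpha> x = conj \<gamma> x" using e x unfolding cM_def by (metis restrict_apply')
    then have "conj \<epsilon> x = conj (inv_into UNIV \<gamma>) (conj \<gamma> x)"
      unfolding \<epsilon>_def using conj_conj[OF bij_imp_bij_inv[OF bg(1)] bg(2), of x] by simp
    also have "\<dots> = x" using conj_conj[OF bij_imp_bij_inv[OF bg(1)] bg(1)] bij_comp_inv[OF bg(1)] by simp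
    finally show ?thesis using conj_eqD[OF NA_bij[OF eN]] by blast
  qed
  define \<epsilon>' where "\<epsilon>' = \<phi>' \<circ> \<epsilon> \<circ> \<phi>"
  have "\<epsilon>' = id"
  proof (rule centralizer_PP)
    show "affine_auto \<epsilon>'" unfolding \<epsilon>'_def using eN phi_affine phi'_affine affine_auto_comp unfolding NA_def by blast
    fix p assume p: "p \<in> PP"
    have "\<epsilon> \<circ> (\<phi> \<circ> p \<circ> \<phi>') = (\<phi> \<circ> p \<circ> \<phi>') \<circ> \<epsilon>" using com[of "conj \<phi> p"] p Mdef conj_phi_eq by auto
    then have "\<phi>' \<circ> (\<epsilon> \<circ> (\<phi> \<circ> p \<circ> \<phi>')) \<circ> \<phi> = \<phi>' \<circ> ((\<phi> \<circ> p \<circ> \<phi>') \<circ> \<epsilon>) \<circ> \<phi>" by simp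
    then have "\<phi>' \<circ> \<epsilon> \<circ> \<phi> \<circ> p \<circ> (\<phi>' \<circ> \<phi>) = (\<phi>' \<circ> \<phi>) \<circ> p \<circ> \<phi>' \<circ> \<epsilon> \<circ> \<phi>" by (simp only: o_assoc)
    then show "\<epsilon>' \<circ> p = p \<circ> \<epsilon>'" unfolding \<epsilon>'_def phi'_phi by (simp add: o_assoc)
  qed
  then have "\<phi> \<circ> \<epsilon>' \<circ> \<phi>' = id" using phi_phi' by simp
  moreover have "\<phi> \<circ> \<epsilon>' \<circ> \<phi>' = \<epsilon>" unfolding \<epsilon>'_def
  proof -
    have "\<phi> \<circ> (\<phi>' \<circ> \<epsilon> \<circ> \<phi>) \<circ> \<phi>' = (\<phi> \<circ> \<phi>') \<circ> \<epsilon> \<circ> (\<phi> \<circ> \<phi>')" by (simp only: o_assoc)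
    then show "\<phi> \<circ> (\<phi>' \<circ> \<epsilon> \<circ> \<phi>) \<circ> \<phi>' = \<epsilon>" using phi_phi' by simp
  qed
  ultimately have "\<epsilon> = id" by simp
  then have "\<gamma> \<circ> (inv_into UNIV \<gamma> \<circ> \<alpha>) = \<gamma>" unfolding \<epsilon>_def by simp
  then show ?thesis using bij_inv_comp[OF bg(1)] by (simp add: o_assoc)
qed

lemma OutG_simps: "carrier (OutG GM) = rcosets\<^bsub>AutM\<^esub> (inn GM)" "mult (OutG GM) = set_mult AutM"
  unfolding OutG_def FactGroup_def by simp_all

theorem Omega_iso: "Omega M \<in> iso (AffG M) (OutG GM)"
proof -
  have nrm: "inn GM \<lhd> AutM" by (rule inn_normal)
  have hom: "Omega M \<in> hom (AffG M) (OutG GM)"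
    unfolding hom_def
  proof (intro CollectI conjI ballI)
    show "Omega M \<in> carrier (AffG M) \<rightarrow> carrier (OutG GM)"
    proof
      fix F assume "F \<in> carrier (AffG M)"
      then obtain \<alpha> where a: "\<alpha> \<in> NA M" "F = indaff M \<alpha>" by (rule AffG_elem)
      show "Omega M F \<in> carrier (OutG GM)" unfolding a(2) Omega_indaff[OF a(1)] OutG_simps RCOSETS_def
        using cM_carrier[OF a(1)] by blast
    qed
    fix F F' assume F: "F \<in> carrier (AffG M)" and F': "F' \<in> carrier (AffG M)"
    obtain \<alpha> where a: "\<alpha> \<in> NA M" "F = indaff M \<alpha>" using F by (rule AffG_elem)
    obtain \<beta> where b: "\<beta> \<in> NA M" "F' = indaff M \<beta>" using F' by (rule AffG_elem)
    have "Omega M (F \<otimes>\<^bsub>AffG M\<^esub> F') = inn GM #>\<^bsub>AutM\<^esub> cM (\<alpha> \<circ> \<beta>)"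
      unfolding a(2) b(2) AffG_mult_indaff[OF a(1) b(1)] Omega_indaff[OF NA_comp[OF a(1) b(1)]] ..
    also have "\<dots> = (inn GM #>\<^bsub>AutM\<^esub> cM \<alpha>) <#>\<^bsub>AutM\<^esub> (inn GM #>\<^bsub>AutM\<^esub> cM \<beta>)"
      unfolding cM_mult[OF a(1) b(1), symmetric]
      using normal.rcos_sum[OF nrm cM_carrier[OF a(1)] cM_carrier[OF b(1)]] by simp
    also have "\<dots> = Omega M F \<otimes>\<^bsub>OutG GM\<^esub> Omega M F'"
      unfolding a(2) b(2) Omega_indaff[OF a(1)] Omega_indaff[OF b(1)] OutG_simps ..
    finally show "Omega M (F \<otimes>\<^bsub>AffG M\<^esub> F') = Omega M F \<otimes>\<^bsub>OutG GM\<^esub> Omega M F'" .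
  qed
  have inj: "inj_on (Omega M) (carrier (AffG M))"
  proof (rule inj_onI)
    fix F F' assume F: "F \<in> carrier (AffG M)" and F': "F' \<in> carrier (AffG M)" and e: "Omega M F = Omega M F'"
    obtain \<alpha> where a: "\<alpha> \<in> NA M" "F = indaff M \<alpha>" using F by (rule AffG_elem)
    obtain \<beta> where b: "\<beta> \<in> NA M" "F' = indaff M \<beta>" using F' by (rule AffG_elem)
    have "cM \<alpha> \<in> inn GM #>\<^bsub>AutM\<^esub> cM \<alpha>" using group.rcos_self[OF group_Aut cM_carrier[OF a(1)] inn_subgroup] .
    then have "cM \<alpha> \<in> inn GM #>\<^bsub>AutM\<^esub> cM \<beta>" using e unfolding a(2) b(2) Omega_indaff[OF a(1)] Omega_indaff[OF b(1)] by simp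
    then obtain h where h: "h \<in> inn GM" "cM \<alpha> = h \<otimes>\<^bsub>AutM\<^esub> cM \<beta>" unfolding r_coset_def by blast
    obtain g where g: "g \<in> M" "h = cM g" using h(1) unfolding inn_eq by blast
    have "cM \<alpha> = cM (g \<circ> \<beta>)" using h(2) g cM_mult[OF M_NA[OF g(1)] b(1)] by simp
    then have "\<alpha> = g \<circ> \<beta>" using cM_inj a(1) NA_comp[OF M_NA[OF g(1)] b(1)] by blast
    then show "F = F'" unfolding a(2) b(2) using indaff_gw g(1) b(1) by simp
  qed
  have surj: "Omega M ` carrier (AffG M) = carrier (OutG GM)"
  proof
    show "Omega M ` carrier (AffG M) \<subseteq> carrier (OutG GM)" using hom unfolding hom_def by blast
    show "carrier (OutG GM) \<subseteq> Omega M ` carrier (AffG M)"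
    proof
      fix C assume "C \<in> carrier (OutG GM)"
      then obtain f where f: "f \<in> carrier AutM" "C = inn GM #>\<^bsub>AutM\<^esub> f" unfolding OutG_simps RCOSETS_def by blast
      obtain \<alpha> where a: "\<alpha> \<in> NA M" "f = cM \<alpha>" using classify f(1) unfolding Aut_simps by blast
      have "C = Omega M (indaff M \<alpha>)" unfolding f(2) a(2) Omega_indaff[OF a(1)] ..
      moreover have "indaff M \<alpha> \<in> carrier (AffG M)" unfolding AffG_simps Aff_def using a(1) by blast
      ultimately show "C \<in> Omega M ` carrier (AffG M)" by blast
    qed
  qed
  show ?thesis unfolding iso_def using hom inj surj unfolding bij_betw_def by blast
qed

end

theorem lemma12:
  fixes M :: "emap set" and c u v :: pt and s :: real
  assumes "space_group2 M"
    and "type_pmm M"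
    and "quotient_is_square M c u v s"
  defines "m_ref \<equiv> refl_line c v"
    and "d_ref \<equiv> refl_line c ((1 / sqrt 2) *\<^sub>R (u + v))"
  shows "m_ref \<in> NA M \<and> d_ref \<in> NA M
    \<and> Sym M = generate (AffG M) {indaff M m_ref, indaff M d_ref}
    \<and> card (Sym M) = 8
    \<and> Sym M = Aff M
    \<and> Omega M \<in> iso (AffG M) (OutG (map_group M))"
proof -
  obtain \<phi> where \<phi>: "affine_auto \<phi>" "M = conj \<phi> ` pmm_std"
    using assms(2) unfolding type_pmm_def by blast
  obtain a11 a12 a21 a22 a1 a2 where a: "a11*a22 - a12*a21 \<noteq> 0" "\<phi> = aff a11 a12 a21 a22 a1 a2"
    using \<phi>(1) unfolding affine_auto_aff by blast
  interpret S: setting M c u v s \<phi> a11 a12 a21 a22 a1 a2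
  proof
    show "space_group2 M" by (rule assms(1))
    show "\<phi> = aff a11 a12 a21 a22 a1 a2" by (rule a(2))
    show "a11*a22 - a12*a21 \<noteq> 0" by (rule a(1))
    show "M = conj \<phi> ` PP" using \<phi>(2) pmm_std_PP by simp
    show "quotient_is_square M c u v s" by (rule assms(3))
  qed
  show ?thesis unfolding m_ref_def d_ref_def
    using S.mref_NA S.dref_NA S.Sym_eq S.gen_eq S.card_Aff S.Omega_iso by simp
qed

end
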